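(* Let $A\in\mathscr{D}\mathrm{iag}$ with $L(A)>0$. There are constants $\delta=\delta(A)>0$ and $\bar n=\bar n(A)\in\mathbb{N}$ such that if $B\in\mathrm{SL}_2(\mathbb{R})^k$ is any cocycle with $d(B,A)\le\delta$, then for all scales $n$ with $\bar n\le n\le\big(\log d(B,\mathscr{D}\mathrm{iag})^{-1}\big)^{3/4}$ we have $$L_n(B)\ge\frac{L(A)}3,\qquad |L_{2n}(B)-L_n(B)|\le2n^{-1/5},$$ $$\mathbb{P}\Big[\Big|\tfrac1n\log\|B^{(n)}\|-L_n(B)\Big|>n^{-1/5}\Big]\le e^{-n^{1/3}}.$$
   Context: $\mathrm{SL}_2(\mathbb{R})$ denotes real $2\times2$ matrices with determinant $\pm1$. $\Sigma=\{1,\dots,k\}$, $p$ a probability vector with positive entries, $X=\Sigma^{\mathbb{Z}}$, $\mathbb{P}=p^{\mathbb{Z}}$ with expectation $\mathbb{E}$; a cocycle $B=(B_1,\dots,B_k)$ has iterates $B^{(n)}(x)=B_{x_{n-1}}\cdots B_{x_0}$ and Lyapunov exponent $L(B)$; $d(A,B)=\max_j\|A_j-B_j\|$. $\mathscr{D}\mathrm{iag}$ is the set of cocycles with two transversal lines invariant under all matrices, $d(B,\mathscr{D}\mathrm{iag})=\inf_{D\in\mathscr{D}\mathrm{iag}}d(B,D)$ (if it is $0$, the upper bound on $n$ is $+\infty$). The finite scale Lyapunov exponent is $L_n(B)=\mathbb{E}[\frac1n\log\|B^{(n)}\|]$. *)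

theory Defs
  imports "HOL-Probability.Probability"
begin

type_synonym mat2 = "real^2^2"

definition mnorm :: "mat2 \<Rightarrow> real" where
  "mnorm A = onorm (\<lambda>v. A *v v)"

text \<open>SL_2(R) in the paper's sense: determinant +1 or -1.\<close>
definition SL2 :: "mat2 set" where
  "SL2 = {A. \<bar>det A\<bar> = 1}"

definition cocycle_dist :: "('s::finite \<Rightarrow> mat2) \<Rightarrow> ('s \<Rightarrow> mat2) \<Rightarrow> real" where
  "cocycle_dist A B = Max (range (\<lambda>j. mnorm (A j - B j)))"

fun iterate :: "('s \<Rightarrow> mat2) \<Rightarrow> nat \<Rightarrow> (int \<Rightarrow> 's) \<Rightarrow> mat2" where
  "iterate B 0 x = mat 1"
| "iterate B (Suc n) x = B (x (int n)) ** iterate B n x"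

definition bernoulli :: "'s pmf \<Rightarrow> (int \<Rightarrow> 's) measure" where
  "bernoulli p = PiM UNIV (\<lambda>_::int. measure_pmf p)"

definition Ln :: "'s pmf \<Rightarrow> ('s \<Rightarrow> mat2) \<Rightarrow> nat \<Rightarrow> real" where
  "Ln p B n = integral\<^sup>L (bernoulli p) (\<lambda>x. ln (mnorm (iterate B n x)) / real n)"

definition Lyap :: "'s pmf \<Rightarrow> ('s \<Rightarrow> mat2) \<Rightarrow> real" where
  "Lyap p B = lim (\<lambda>n. Ln p B n)"

definition Diag :: "('s \<Rightarrow> mat2) set" where
  "Diag = {D. (\<forall>j. D j \<in> SL2) \<and>
     (\<exists>u v :: real^2. u \<noteq> 0 \<and> v \<noteq> 0 \<and> \<not> (\<exists>c. v = c *\<^sub>R u) \<and>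
        (\<forall>j. (\<exists>a. D j *v u = a *\<^sub>R u) \<and> (\<exists>b. D j *v v = b *\<^sub>R v)))}"

definition dist_Diag :: "('s::finite \<Rightarrow> mat2) \<Rightarrow> real" where
  "dist_Diag B = Inf ((\<lambda>D. cocycle_dist B D) ` Diag)"

end

theory Submission
  imports Defs "HOL-Real_Asymp.Real_Asymp"
begin

lemma norm2: "norm (x::real^2) = sqrt ((x$1)^2 + (x$2)^2)"
  by (simp add: norm_vec_def L2_set_def sum_2)

lemma norm2_sq: "(norm (x::real^2))^2 = (x$1)^2 + (x$2)^2"
  by (simp add: norm2)

lemma mv2: "((A::mat2) *v x) $ 1 = A$1$1 * x$1 + A$1$2 * x$2"
           "((A::mat2) *v x) $ 2 = A$2$1 * x$1 + A$2$2 * x$2"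
  by (simp_all add: matrix_vector_mult_def sum_2)

lemma mn_bound: "norm (A *v w) \<le> mnorm A * norm w"
  unfolding mnorm_def using onorm[OF matrix_vector_mul_bounded_linear] by blast

lemma mn_le: "(\<And>w. norm (A *v w) \<le> c * norm w) \<Longrightarrow> mnorm A \<le> c"
  unfolding mnorm_def by (rule onorm_le)

lemma mn_nonneg: "0 \<le> mnorm A"
  unfolding mnorm_def by (rule onorm_pos_le[OF matrix_vector_mul_bounded_linear])

lemma mn_entry: "\<bar>A $ i $ j\<bar> \<le> mnorm A"
  unfolding mnorm_def by (rule matrix_component_le_onorm)

lemma mn_add: "mnorm (A + B) \<le> mnorm A + mnorm B"
proof (rule mn_le)
  fix w
  have "norm ((A + B) *v w) = norm (A *v w + B *v w)" by (simp add: matrix_vector_mult_add_rdistrib)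
  also have "\<dots> \<le> norm (A *v w) + norm (B *v w)" by (rule norm_triangle_ineq)
  also have "\<dots> \<le> mnorm A * norm w + mnorm B * norm w" by (intro add_mono mn_bound)
  finally show "norm ((A + B) *v w) \<le> (mnorm A + mnorm B) * norm w" by (simp add: algebra_simps)
qed

lemma mn_mult: "mnorm (A ** B) \<le> mnorm A * mnorm B"
proof (rule mn_le)
  fix w
  have "norm ((A ** B) *v w) = norm (A *v (B *v w))" by (simp add: matrix_vector_mul_assoc)
  also have "\<dots> \<le> mnorm A * norm (B *v w)" by (rule mn_bound)
  also have "\<dots> \<le> mnorm A * (mnorm B * norm w)" by (intro mult_left_mono mn_bound mn_nonneg)
  finally show "norm ((A ** B) *v w) \<le> (mnorm A * mnorm B) * norm w" by (simp add: algebra_simps)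
qed

lemma mn_sym: "mnorm (A - B) = mnorm (B - A)"
proof -
  have "mnorm (A - B) \<le> mnorm (B - A)" for A B :: mat2
  proof (rule mn_le)
    fix w
    have "norm ((A - B) *v w) = norm ((B - A) *v w)"
      by (simp add: matrix_vector_mult_diff_rdistrib norm_minus_commute)
    then show "norm ((A - B) *v w) \<le> mnorm (B - A) * norm w" using mn_bound by simp
  qed
  then show ?thesis by (meson antisym)
qed

lemma mn_tri: "mnorm (A - C) \<le> mnorm (A - B) + mnorm (B - C)"
  using mn_add[of "A - B" "B - C"] by simp

lemma mn_diff: "mnorm A \<le> mnorm B + mnorm (A - B)"
  using mn_add[of B "A - B"] by simp

lemma det2_le: "\<bar>x$1 * y$2 - x$2 * y$1\<bar> \<le> norm (x::real^2) * norm (y::real^2)"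
proof -
  have "(x$1 * y$2 - x$2 * y$1)^2 \<le> ((x$1)^2 + (x$2)^2) * ((y$1)^2 + (y$2)^2)"
  proof -
    have "((x$1)^2 + (x$2)^2) * ((y$1)^2 + (y$2)^2) = (x$1 * y$2 - x$2 * y$1)^2 + (x$1 * y$1 + x$2 * y$2)^2"
      by (simp add: power2_eq_square algebra_simps)
    then show ?thesis by simp
  qed
  also have "\<dots> = (norm x * norm y)^2" by (simp add: power_mult_distrib norm2_sq)
  finally show ?thesis using power2_le_imp_le[of "\<bar>x$1 * y$2 - x$2 * y$1\<bar>" "norm x * norm y"] by simp
qed

lemma mn_det: "\<bar>det A\<bar> \<le> (mnorm A)^2"
proof -
  define e1 where "e1 = (axis 1 (1::real) :: real^2)"
  define e2 where "e2 = (axis 2 (1::real) :: real^2)"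
  have n1: "norm e1 = 1" "norm e2 = 1" by (simp_all add: e1_def e2_def)
  have c: "(A *v e1) $ 1 = A$1$1" "(A *v e1) $ 2 = A$2$1" "(A *v e2) $ 1 = A$1$2" "(A *v e2) $ 2 = A$2$2"
    by (simp_all add: mv2 e1_def e2_def axis_def)
  have "\<bar>det A\<bar> = \<bar>(A *v e1)$1 * (A *v e2)$2 - (A *v e1)$2 * (A *v e2)$1\<bar>"
    by (simp add: c det_2 mult.commute)
  also have "\<dots> \<le> norm (A *v e1) * norm (A *v e2)" by (rule det2_le)
  also have "\<dots> \<le> mnorm A * mnorm A"
    using mn_bound[of A e1] mn_bound[of A e2] n1 by (simp add: mult_mono mn_nonneg)
  finally show ?thesis by (simp add: power2_eq_square)
qed

lemma mn_ge1: "\<bar>det A\<bar> = 1 \<Longrightarrow> 1 \<le> mnorm A"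
  using mn_det[of A] mn_nonneg[of A] by (metis power2_le_imp_le one_power2)

lemma mn_one: "mnorm (mat 1) = 1"
proof (rule antisym)
  show "mnorm (mat 1) \<le> 1" by (rule mn_le) simp
  show "1 \<le> mnorm (mat 1)" by (rule mn_ge1) simp
qed

lemma iter_det: "(\<forall>j. B j \<in> SL2) \<Longrightarrow> \<bar>det (iterate B n x)\<bar> = 1"
  by (induction n) (auto simp: SL2_def det_mul abs_mult)

lemma iter_ge1: "(\<forall>j. B j \<in> SL2) \<Longrightarrow> 1 \<le> mnorm (iterate B n x)"
  by (rule mn_ge1[OF iter_det])

lemma iter_bound:
  assumes "\<And>j. mnorm (B j) \<le> C"
  shows "mnorm (iterate B n x) \<le> C^n"
proof (induction n)
  case 0 then show ?case by (simp add: mn_one)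
next
  case (Suc n)
  have "mnorm (iterate B (Suc n) x) \<le> mnorm (B (x (int n))) * mnorm (iterate B n x)"
    by (simp add: mn_mult)
  also have "\<dots> \<le> C * C^n"
    by (intro mult_mono assms Suc mn_nonneg) (meson assms mn_nonneg order_trans)
  finally show ?case by simp
qed

lemma iter_pert:
  assumes "\<And>j. mnorm (B j) \<le> C" "\<And>j. mnorm (D j) \<le> C" "\<And>j. mnorm (B j - D j) \<le> \<eta>" "1 \<le> C"
  shows "mnorm (iterate B n x - iterate D n x) \<le> n * C^n * \<eta>"
proof (induction n)
  case 0
  have "mnorm (0::mat2) \<le> 0" by (rule mn_le) simp
  then show ?case by simp
next
  case (Suc n)
  let ?b = "B (x (int n))" and ?d = "D (x (int n))" and ?X = "iterate B n x" and ?Y = "iterate D n x"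
  have eq: "iterate B (Suc n) x - iterate D (Suc n) x = ?b ** (?X - ?Y) + (?b - ?d) ** ?Y"
    by (simp add: vec_eq_iff matrix_matrix_mult_def sum_2 algebra_simps)
  have e0: "0 \<le> \<eta>" using assms(3)[of undefined] mn_nonneg order_trans by blast
  have "mnorm (?b ** (?X - ?Y)) \<le> C * (n * C^n * \<eta>)"
    by (rule order_trans[OF mn_mult]) (intro mult_mono assms Suc mn_nonneg, use assms(4) in auto)
  moreover have "mnorm ((?b - ?d) ** ?Y) \<le> \<eta> * C^n"
    by (rule order_trans[OF mn_mult]) (intro mult_mono assms iter_bound mn_nonneg, use e0 in auto)
  ultimately have "mnorm (iterate B (Suc n) x - iterate D (Suc n) x) \<le> C * (n * C^n * \<eta>) + \<eta> * C^n"
    unfolding eq by (meson add_mono mn_add order_trans)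
  also have "\<dots> \<le> Suc n * C^(Suc n) * \<eta>"
  proof -
    have "\<eta> * C^n \<le> \<eta> * C^(Suc n)" using assms(4) e0 by (intro mult_left_mono) auto
    then show ?thesis by (simp add: algebra_simps)
  qed
  finally show ?case .
qed

lemma ln_lip: "1 \<le> a \<Longrightarrow> 1 \<le> (b::real) \<Longrightarrow> \<bar>ln a - ln b\<bar> \<le> \<bar>a - b\<bar>"
proof -
  have *: "ln a - ln b \<le> a - b" if "1 \<le> a" "1 \<le> b" "b \<le> a" for a b :: real
  proof -
    have "ln a - ln b = ln (a / b)" using that by (simp add: ln_div)
    also have "\<dots> \<le> a / b - 1" using that by (intro ln_le_minus_one) auto
    also have "\<dots> = (a - b) / b" using that by (simp add: field_simps)
    also have "\<dots> \<le> a - b" using that by (simp add: divide_le_eq mult_le_cancel_left1)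
    finally show ?thesis .
  qed
  assume "1 \<le> a" "1 \<le> b"
  then show ?thesis using *[of a b] *[of b a] by (cases "b \<le> a") (auto simp: ln_le_cancel_iff)
qed

lemma F_pert:
  assumes "\<forall>j. B j \<in> SL2" "\<forall>j. D j \<in> SL2"
    "\<And>j. mnorm (B j) \<le> C" "\<And>j. mnorm (D j) \<le> C" "\<And>j. mnorm (B j - D j) \<le> \<eta>" "1 \<le> C" "0 < n"
  shows "\<bar>ln (mnorm (iterate B n x)) / n - ln (mnorm (iterate D n x)) / n\<bar> \<le> C^n * \<eta>"
proof -
  have "\<bar>ln (mnorm (iterate B n x)) - ln (mnorm (iterate D n x))\<bar> \<le> \<bar>mnorm (iterate B n x) - mnorm (iterate D n x)\<bar>"
    by (intro ln_lip iter_ge1 assms)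
  also have "\<dots> \<le> mnorm (iterate B n x - iterate D n x)"
    using mn_diff[of "iterate B n x" "iterate D n x"] mn_diff[of "iterate D n x" "iterate B n x"] mn_sym[of "iterate B n x" "iterate D n x"]
    by linarith
  also have "\<dots> \<le> n * C^n * \<eta>" by (rule iter_pert) (use assms in auto)
  finally have "\<bar>ln (mnorm (iterate B n x)) - ln (mnorm (iterate D n x))\<bar> / n \<le> C^n * \<eta>"
    using assms(7) by (simp add: divide_le_eq mult_ac)
  then show ?thesis by (simp add: diff_divide_distrib[symmetric])
qed

definition det2 :: "real^2 \<Rightarrow> real^2 \<Rightarrow> real" where
  "det2 u v = u$1 * v$2 - u$2 * v$1"

lemma vec2_eq: "(x::real^2) = y \<longleftrightarrow> x$1 = y$1 \<and> x$2 = y$2"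
  by (simp add: vec_eq_iff forall_2)

lemma det2_ne0:
  assumes "u \<noteq> 0" "\<not> (\<exists>c. v = c *\<^sub>R u)"
  shows "det2 u v \<noteq> 0"
proof
  assume d: "det2 u v = 0"
  show False
  proof (cases "u$1 = 0")
    case True
    with assms(1) have u2: "u$2 \<noteq> 0" by (simp add: vec2_eq)
    have "v = (v$2 / u$2) *\<^sub>R u"
      using d True u2 by (simp add: vec2_eq det2_def field_simps)
    with assms(2) show False by blast
  next
    case False
    have "v = (v$1 / u$1) *\<^sub>R u"
      using d False by (simp add: vec2_eq det2_def field_simps)
    with assms(2) show False by blast
  qed
qed

lemma decomp:
  assumes "det2 u v \<noteq> 0"
  shows "w = (det2 w v / det2 u v) *\<^sub>R u + (det2 u w / det2 u v) *\<^sub>R v"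
proof -
  have a: "det2 w v * u$1 + det2 u w * v$1 = w$1 * det2 u v" by (simp add: det2_def algebra_simps)
  have b: "det2 w v * u$2 + det2 u w * v$2 = w$2 * det2 u v" by (simp add: det2_def algebra_simps)
  show ?thesis using assms a b by (simp add: vec2_eq add_divide_distrib[symmetric] eq_divide_eq)
qed

lemma det2_le_norm: "\<bar>det2 u v\<bar> \<le> norm u * norm v"
  unfolding det2_def by (rule det2_le)

lemma iter_eig:
  assumes "\<And>j. D j *v u = a j *\<^sub>R u"
  shows "iterate D n x *v u = (\<Prod>i<n. a (x (int i))) *\<^sub>R u"
proof (induction n)
  case 0 then show ?case by simp
next
  case (Suc n)
  have "iterate D (Suc n) x *v u = D (x (int n)) *v (iterate D n x *v u)"
    by (simp add: matrix_vector_mul_assoc)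
  also have "\<dots> = (\<Prod>i<n. a (x (int i))) *\<^sub>R (D (x (int n)) *v u)"
    by (simp add: Suc matrix_vector_mult_scaleR)
  also have "\<dots> = (\<Prod>i<Suc n. a (x (int i))) *\<^sub>R u"
    by (simp add: assms mult.commute)
  finally show ?case .
qed

lemma mat_lower:
  assumes "M *v u = \<alpha> *\<^sub>R u" "norm u = 1"
  shows "\<bar>\<alpha>\<bar> \<le> mnorm M"
  using mn_bound[of M u] assms by simp

lemma mat_upper:
  assumes "M *v u = \<alpha> *\<^sub>R u" "M *v v = \<beta> *\<^sub>R v" "norm u = 1" "norm v = 1" "det2 u v \<noteq> 0"
  shows "mnorm M \<le> 2 * max \<bar>\<alpha>\<bar> \<bar>\<beta>\<bar> / \<bar>det2 u v\<bar>"
proof (rule mn_le)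
  fix w
  define s where "s = det2 w v / det2 u v"
  define t where "t = det2 u w / det2 u v"
  have w: "w = s *\<^sub>R u + t *\<^sub>R v" unfolding s_def t_def by (rule decomp[OF assms(5)])
  have s: "\<bar>s\<bar> \<le> norm w / \<bar>det2 u v\<bar>"
    unfolding s_def using det2_le_norm[of w v] assms by (simp add: abs_div divide_right_mono)
  have t: "\<bar>t\<bar> \<le> norm w / \<bar>det2 u v\<bar>"
    unfolding t_def using det2_le_norm[of u w] assms by (simp add: abs_div divide_right_mono)
  have "M *v w = (s * \<alpha>) *\<^sub>R u + (t * \<beta>) *\<^sub>R v"
    by (subst w) (simp add: matrix_vector_right_distrib matrix_vector_mult_scaleR assms)
  then have "norm (M *v w) \<le> \<bar>s\<bar> * \<bar>\<alpha>\<bar> + \<bar>t\<bar> * \<bar>\<beta>\<bar>"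
    using norm_triangle_ineq[of "(s * \<alpha>) *\<^sub>R u" "(t * \<beta>) *\<^sub>R v"] assms by (simp add: abs_mult)
  also have "\<dots> \<le> (norm w / \<bar>det2 u v\<bar>) * max \<bar>\<alpha>\<bar> \<bar>\<beta>\<bar> + (norm w / \<bar>det2 u v\<bar>) * max \<bar>\<alpha>\<bar> \<bar>\<beta>\<bar>"
    by (intro add_mono mult_mono s t) auto
  finally show "norm (M *v w) \<le> 2 * max \<bar>\<alpha>\<bar> \<bar>\<beta>\<bar> / \<bar>det2 u v\<bar> * norm w"
    by (simp add: field_simps)
qed

definition disc :: "mat2 \<Rightarrow> real" where
  "disc M = (M$1$1 - M$2$2)^2 + 4 * M$1$2 * M$2$1"

lemma eig_algebra:
  assumes "M *v u = \<alpha> *\<^sub>R u" "M *v v = \<beta> *\<^sub>R v" "det2 u v \<noteq> 0"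
  shows "det M = \<alpha> * \<beta>" "disc M = (\<alpha> - \<beta>)^2"
proof -
  define d where "d = det2 u v"
  have e1: "M$1$1 * u$1 + M$1$2 * u$2 = \<alpha> * u$1" using assms(1) by (simp add: vec2_eq mv2)
  have e2: "M$2$1 * u$1 + M$2$2 * u$2 = \<alpha> * u$2" using assms(1) by (simp add: vec2_eq mv2)
  have e3: "M$1$1 * v$1 + M$1$2 * v$2 = \<beta> * v$1" using assms(2) by (simp add: vec2_eq mv2)
  have e4: "M$2$1 * v$1 + M$2$2 * v$2 = \<beta> * v$2" using assms(2) by (simp add: vec2_eq mv2)
  have dn: "d \<noteq> 0" using assms(3) by (simp add: d_def)
  have "M$1$1 * d = (\<alpha> * u$1) * v$2 - (\<beta> * v$1) * u$2"
    unfolding e1[symmetric] e3[symmetric] by (simp add: d_def det2_def algebra_simps)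
  note q11 = this
  then have m11: "M$1$1 = (\<alpha> * u$1 * v$2 - \<beta> * v$1 * u$2) / d" using dn by (simp add: field_simps)
  have "M$1$2 * d = (\<beta> * v$1) * u$1 - (\<alpha> * u$1) * v$1"
    unfolding e1[symmetric] e3[symmetric] by (simp add: d_def det2_def algebra_simps)
  note q12 = this
  then have m12: "M$1$2 = (\<beta> - \<alpha>) * u$1 * v$1 / d" using dn by (simp add: field_simps)
  have "M$2$1 * d = (\<alpha> * u$2) * v$2 - (\<beta> * v$2) * u$2"
    unfolding e2[symmetric] e4[symmetric] by (simp add: d_def det2_def algebra_simps)
  note q21 = this
  then have m21: "M$2$1 = (\<alpha> - \<beta>) * u$2 * v$2 / d" using dn by (simp add: field_simps)
  have "M$2$2 * d = (\<beta> * v$2) * u$1 - (\<alpha> * u$2) * v$1"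
    unfolding e2[symmetric] e4[symmetric] by (simp add: d_def det2_def algebra_simps)
  note q22 = this
  then have m22: "M$2$2 = (\<beta> * v$2 * u$1 - \<alpha> * u$2 * v$1) / d" using dn by (simp add: field_simps)
  have dd: "d = u$1 * v$2 - u$2 * v$1" by (simp add: d_def det2_def)
  have "det M * d^2 = (M$1$1 * d) * (M$2$2 * d) - (M$1$2 * d) * (M$2$1 * d)"
    unfolding det_2 by (simp add: algebra_simps power2_eq_square)
  also have "\<dots> = (\<alpha> * \<beta>) * d^2" unfolding q11 q12 q21 q22 unfolding dd
    by (simp add: algebra_simps power2_eq_square)
  finally show "det M = \<alpha> * \<beta>" using dn by simp
  have "disc M * d^2 = (M$1$1 * d - M$2$2 * d)^2 + 4 * (M$1$2 * d) * (M$2$1 * d)"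
    unfolding disc_def by (simp add: algebra_simps power2_eq_square)
  also have "\<dots> = (\<alpha> - \<beta>)^2 * d^2" unfolding q11 q12 q21 q22 unfolding dd
    by (simp add: algebra_simps power2_eq_square)
  finally show "disc M = (\<alpha> - \<beta>)^2" using dn by simp
qed

lemma angle_bound:
  assumes "M *v u = \<alpha> *\<^sub>R u" "M *v v = \<beta> *\<^sub>R v" "norm u = 1" "norm v = 1"
  shows "(\<alpha> - \<beta>)^2 \<le> 8 * (mnorm M)^2 * (det2 u v)^2"
proof -
  define c where "c = u$1 * v$1 + u$2 * v$2"
  have u1: "(u$1)^2 + (u$2)^2 = 1" using norm2_sq[of u] assms(3) by simp
  have v1: "(v$1)^2 + (v$2)^2 = 1" using norm2_sq[of v] assms(4) by simp
  have "(det2 u v)^2 + c^2 = ((u$1)^2 + (u$2)^2) * ((v$1)^2 + (v$2)^2)"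
    by (simp add: det2_def c_def power2_eq_square algebra_simps)
  then have lag: "(det2 u v)^2 + c^2 = 1" using u1 v1 by simp
  then have c1: "\<bar>c\<bar> \<le> 1"
    by (metis abs_le_square_iff abs_one le_add_same_cancel2 one_power2 zero_le_power2)
  define s :: real where "s = (if c \<ge> 0 then 1 else -1)"
  have s2: "s^2 = 1" and sc: "s * c = \<bar>c\<bar>" by (auto simp: s_def)
  define w where "w = v - s *\<^sub>R u"
  have "(norm w)^2 = (v$1 - s * u$1)^2 + (v$2 - s * u$2)^2" by (simp add: norm2_sq w_def)
  also have "\<dots> = ((v$1)^2 + (v$2)^2) + s^2 * ((u$1)^2 + (u$2)^2) - 2 * (s * c)"
    by (simp add: c_def power2_eq_square algebra_simps)
  also have "\<dots> = 2 - 2 * \<bar>c\<bar>" using u1 v1 s2 sc by simp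
  finally have nw: "(norm w)^2 = 2 - 2 * \<bar>c\<bar>" .
  have "M *v w - \<alpha> *\<^sub>R w = (\<beta> - \<alpha>) *\<^sub>R v"
    by (simp add: w_def matrix_vector_mult_diff_distrib matrix_vector_mult_scaleR assms algebra_simps)
  then have "\<bar>\<beta> - \<alpha>\<bar> = norm (M *v w - \<alpha> *\<^sub>R w)" using assms(4) by simp
  also have "\<dots> \<le> norm (M *v w) + \<bar>\<alpha>\<bar> * norm w" using norm_triangle_ineq4[of "M *v w" "\<alpha> *\<^sub>R w"] by simp
  also have "\<dots> \<le> mnorm M * norm w + mnorm M * norm w"
    by (intro add_mono mn_bound mult_right_mono mat_lower[OF assms(1,3)]) auto
  finally have ab: "\<bar>\<alpha> - \<beta>\<bar> \<le> 2 * mnorm M * norm w" by simp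
  have "(\<alpha> - \<beta>)^2 = \<bar>\<alpha> - \<beta>\<bar>^2" by simp
  also have "\<dots> \<le> (2 * mnorm M * norm w)^2" using ab by (intro power_mono) auto
  also have "\<dots> = 4 * (mnorm M)^2 * (2 - 2 * \<bar>c\<bar>)" by (simp add: power_mult_distrib nw)
  also have "\<dots> \<le> 4 * (mnorm M)^2 * (2 - 2 * c^2)"
  proof -
    have "c^2 \<le> \<bar>c\<bar>" using c1 by (metis abs_ge_zero abs_square_le_1 power2_abs abs_le_square_iff mult_left_le_one_le power2_eq_square)
    then show ?thesis by (intro mult_left_mono) auto
  qed
  also have "\<dots> = 8 * (mnorm M)^2 * (det2 u v)^2"
  proof -
    have "2 - 2 * c^2 = 2 * (det2 u v)^2" using lag by simp
    then show ?thesis by simp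
  qed
  finally show ?thesis .
qed

lemma bern_prob: "prob_space (bernoulli p)"
  unfolding bernoulli_def by (rule prob_space_PiM) (simp add: prob_space_measure_pmf)

lemma bern_space: "space (bernoulli p) = UNIV"
  by (simp add: bernoulli_def space_PiM)

lemma bern_comp: "(\<lambda>x. x i) \<in> measurable (bernoulli p) (measure_pmf p)"
  unfolding bernoulli_def by (rule measurable_component_singleton) simp

lemma bern_pred: "{x. x i = j} \<in> sets (bernoulli p)"
proof -
  have "{x. x i = j} = (\<lambda>x. x i) -` {j} \<inter> space (bernoulli p)" by (auto simp: bern_space)
  also have "\<dots> \<in> sets (bernoulli p)" by (rule measurable_sets[OF bern_comp]) simp
  finally show ?thesis .
qed

lemma bern_meas_g: "(\<lambda>x. g (x i) :: real) \<in> borel_measurable (bernoulli p)"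
  by (rule measurable_compose[OF bern_comp]) simp

lemma bern_meas_iter: fixes B :: "'s::finite \<Rightarrow> mat2" shows "(\<lambda>x. h (iterate B n x) :: real) \<in> borel_measurable (bernoulli p)"
proof (induction n arbitrary: h)
  case 0 then show ?case by simp
next
  case (Suc n)
  have eq: "(\<lambda>x. h (iterate B (Suc n) x)) = (\<lambda>x. \<Sum>j\<in>UNIV. (if x (int n) = j then h (B j ** iterate B n x) else 0))"
    by (rule ext) (simp add: sum.delta')
  show ?case unfolding eq
  proof (rule borel_measurable_sum)
    fix j
    show "(\<lambda>x. if x (int n) = j then h (B j ** iterate B n x) else 0) \<in> borel_measurable (bernoulli p)"
      using Suc[of "\<lambda>M. h (B j ** M)"] by (intro measurable_If) (auto simp: bern_pred bern_space)
  qed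
qed

lemma bern_int_g: "integral\<^sup>L (bernoulli p) (\<lambda>x. g (x i)) = measure_pmf.expectation p (g :: _ \<Rightarrow> real)"
proof -
  have d: "distr (bernoulli p) (measure_pmf p) (\<lambda>x. x i) = measure_pmf p"
    unfolding bernoulli_def by (rule distr_PiM_component) (auto simp: prob_space_measure_pmf)
  have "integral\<^sup>L (bernoulli p) (\<lambda>x. g (x i)) = integral\<^sup>L (distr (bernoulli p) (measure_pmf p) (\<lambda>x. x i)) g"
    by (rule integral_distr[symmetric, OF bern_comp]) simp
  then show ?thesis by (simp add: d)
qed

lemma bern_indep:
  fixes p :: "'s pmf"
  assumes "finite I" "I \<noteq> {}"
  shows "prob_space.indep_vars (bernoulli p) (\<lambda>_. borel) (\<lambda>i x. g (x i) :: real) I"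
proof -
  interpret P: prob_space "bernoulli p" by (rule bern_prob)
  interpret PP: product_prob_space "\<lambda>_. measure_pmf p" UNIV
    by unfold_locales (simp add: prob_space_measure_pmf)
  have "P.indep_vars (\<lambda>_. measure_pmf p) (\<lambda>i x. x i) I"
  proof (subst P.indep_vars_iff_distr_eq_PiM)
    show "I \<noteq> {}" by fact
    show "\<And>i. (\<lambda>x::int\<Rightarrow>'s. x i) \<in> measurable (bernoulli p) (measure_pmf p)" by (rule bern_comp)
    have "distr (bernoulli p) (Pi\<^sub>M I (\<lambda>i. measure_pmf p)) (\<lambda>x. restrict x I) = Pi\<^sub>M I (\<lambda>i. measure_pmf p)"
      unfolding bernoulli_def by (rule PP.distr_PiM_restrict_finite) (use assms in auto)
    moreover have "distr (bernoulli p) (measure_pmf p) (\<lambda>x. x i) = measure_pmf p" for i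
      unfolding bernoulli_def by (rule distr_PiM_component) (auto simp: prob_space_measure_pmf)
    ultimately show "distr (bernoulli p) (Pi\<^sub>M I (\<lambda>i. measure_pmf p)) (\<lambda>x. \<lambda>i\<in>I. x i) =
       Pi\<^sub>M I (\<lambda>i. distr (bernoulli p) (measure_pmf p) (\<lambda>x. x i))" by simp
  qed
  then show ?thesis by (rule P.indep_vars_compose2) simp
qed

lemma exp_tail_bound:
  assumes P: "prob_space M" and f: "f \<in> borel_measurable M"
    and b: "\<And>x. x \<in> space M \<Longrightarrow> \<bar>f x\<bar> \<le> R" and t: "0 \<le> t"
  shows "integral\<^sup>L M (\<lambda>x. \<bar>f x\<bar>) \<le> t + R * measure M {x\<in>space M. \<bar>f x\<bar> \<ge> t}"
proof -
  interpret prob_space M by (rule P)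
  let ?A = "{x\<in>space M. \<bar>f x\<bar> \<ge> t}"
  have A: "?A \<in> sets M" using f by measurable
  have R: "0 \<le> R" using b[of "SOME x. x \<in> space M"] not_empty by (metis abs_ge_zero order_trans some_in_eq)
  have "integral\<^sup>L M (\<lambda>x. \<bar>f x\<bar>) \<le> integral\<^sup>L M (\<lambda>x. t + R * indicator ?A x)"
  proof (rule integral_mono)
    show "integrable M (\<lambda>x. \<bar>f x\<bar>)"
      by (rule integrable_const_bound[where B=R]) (use b f in auto)
    show "integrable M (\<lambda>x. t + R * indicator ?A x)"
      using A by (intro Bochner_Integration.integrable_add integrable_mult_right) (auto simp: emeasure_eq_measure)
    fix x assume x: "x \<in> space M"
    show "\<bar>f x\<bar> \<le> t + R * indicator ?A x"
      using b[OF x] x t by (cases "\<bar>f x\<bar> \<ge> t") (auto simp: indicator_def)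
  qed
  also have "\<dots> = t + R * measure M ?A"
    using A by (subst Bochner_Integration.integral_add) (auto simp: prob_space emeasure_eq_measure)
  finally show ?thesis .
qed

lemma hoeff_bern:
  fixes p :: "'s pmf" and g :: "'s \<Rightarrow> real"
  assumes gR: "\<And>j. \<bar>g j\<bar> \<le> R" and R: "0 < R" and n: "0 < n" and t: "0 \<le> t"
  shows "measure (bernoulli p) {x\<in>space (bernoulli p). \<bar>(\<Sum>k<n. g (x (int k))) / n - measure_pmf.expectation p g\<bar> \<ge> t}
          \<le> 2 * exp (- (n * t^2 / (2 * R^2)))"
proof -
  interpret P: prob_space "bernoulli p" by (rule bern_prob)
  define I where "I = int ` {..<n}"
  have I: "finite I" "I \<noteq> {}" using n by (auto simp: I_def)
  define mu where "mu = (\<Sum>i\<in>I. P.expectation (\<lambda>x. g (x i)))"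
  interpret H: Hoeffding_ineq "bernoulli p" I "\<lambda>i x. g (x i)" "\<lambda>_. -R" "\<lambda>_. R" mu
  proof unfold_locales
    show "finite I" by fact
    show "P.indep_vars (\<lambda>_. borel) (\<lambda>i x. g (x i)) I" by (rule bern_indep[OF I])
    fix i show "AE x in bernoulli p. g (x i) \<in> {-R..R}"
    proof (rule AE_I2)
      fix x show "g (x i) \<in> {-R..R}" using gR[of "x i"] by (auto simp: abs_le_iff)
    qed
  qed (simp add: mu_def)
  have cardI: "card I = n" unfolding I_def by (simp add: card_image inj_on_def)
  have mu: "mu = n * measure_pmf.expectation p g"
    unfolding mu_def bern_int_g by (simp add: cardI)
  have sumI: "(\<Sum>i\<in>I. g (x i)) = (\<Sum>k<n. g (x (int k)))" for x
    unfolding I_def by (subst sum.reindex) (auto simp: inj_on_def)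
  have sq: "(\<Sum>i\<in>I. (R - (-R))^2) = n * (4 * R^2)" by (simp add: cardI power2_eq_square algebra_simps)
  have "{x\<in>space (bernoulli p). \<bar>(\<Sum>k<n. g (x (int k))) / n - measure_pmf.expectation p g\<bar> \<ge> t}
      = {x\<in>space (bernoulli p). \<bar>(\<Sum>i\<in>I. g (x i)) - mu\<bar> \<ge> n * t}"
  proof -
    have "\<bar>s / n - e\<bar> \<ge> t \<longleftrightarrow> \<bar>s - n * e\<bar> \<ge> n * t" for s e :: real
    proof -
      have "\<bar>s - n * e\<bar> = n * \<bar>s / n - e\<bar>" using n by (simp add: field_simps abs_mult[symmetric])
      then show ?thesis using n by simp
    qed
    then show ?thesis by (simp add: sumI mu)
  qed
  also have "measure (bernoulli p) \<dots> \<le> 2 * exp (-2 * (n * t)^2 / (\<Sum>i\<in>I. (R - (-R))^2))"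
    by (rule H.Hoeffding_ineq_abs_ge) (use n t R sq in auto)
  also have "-2 * (n * t)^2 / (\<Sum>i\<in>I. (R - (-R))^2) = - (n * t^2 / (2 * R^2))"
    unfolding sq using n R by (simp add: field_simps power2_eq_square)
  finally show ?thesis .
qed

definition eigd :: "('s \<Rightarrow> mat2) \<Rightarrow> real^2 \<Rightarrow> real^2 \<Rightarrow> ('s \<Rightarrow> real) \<Rightarrow> ('s \<Rightarrow> real) \<Rightarrow> bool" where
  "eigd D u v a b \<longleftrightarrow> norm u = 1 \<and> norm v = 1 \<and> det2 u v \<noteq> 0 \<and>
     (\<forall>j. D j *v u = a j *\<^sub>R u) \<and> (\<forall>j. D j *v v = b j *\<^sub>R v)"

lemma diag_eigd:
  assumes "D \<in> Diag"
  shows "\<exists>u v a b. eigd D u v a b"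
proof -
  obtain u v where u: "u \<noteq> 0" and v: "v \<noteq> 0" and nc: "\<not> (\<exists>c. v = c *\<^sub>R u)"
    and ev: "\<forall>j. (\<exists>a. D j *v u = a *\<^sub>R u) \<and> (\<exists>b. D j *v v = b *\<^sub>R v)"
    using assms unfolding Diag_def by blast
  define a where "a j = (SOME a. D j *v u = a *\<^sub>R u)" for j
  define b where "b j = (SOME b. D j *v v = b *\<^sub>R v)" for j
  have ea: "D j *v u = a j *\<^sub>R u" for j unfolding a_def using ev by (meson someI_ex)
  have eb: "D j *v v = b j *\<^sub>R v" for j unfolding b_def using ev by (meson someI_ex)
  define u' where "u' = (1 / norm u) *\<^sub>R u"
  define v' where "v' = (1 / norm v) *\<^sub>R v"
  have nu: "norm u' = 1" "norm v' = 1" using u v by (auto simp: u'_def v'_def)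
  have u'0: "u' \<noteq> 0" using nu by auto
  have nc': "\<not> (\<exists>c. v' = c *\<^sub>R u')"
  proof
    assume "\<exists>c. v' = c *\<^sub>R u'"
    then obtain c where "v' = c *\<^sub>R u'" by blast
    then have c: "v' = c *\<^sub>R u'" .
    have "v = norm v *\<^sub>R v'" using v by (simp add: v'_def)
    also have "\<dots> = (norm v * c / norm u) *\<^sub>R u" unfolding c by (simp add: u'_def)
    finally have "v = (norm v * c / norm u) *\<^sub>R u" .
    with nc show False by blast
  qed
  have "eigd D u' v' a b"
    unfolding eigd_def using nu det2_ne0[OF u'0 nc'] ea eb
    by (simp add: u'_def v'_def matrix_vector_mult_scaleR)
  then show ?thesis by blast
qed


definition hb :: "real \<Rightarrow> nat \<Rightarrow> real \<Rightarrow> real" where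
  "hb R n t = exp (- (real n * t^2 / (2 * R^2)))"

definition eb :: "real \<Rightarrow> nat \<Rightarrow> real \<Rightarrow> real" where
  "eb R n t = t + 4 * R * hb R n t"

lemma abs_int_le:
  assumes "integrable M f"
  shows "\<bar>integral\<^sup>L M f\<bar> \<le> integral\<^sup>L M (\<lambda>x. \<bar>f x :: real\<bar>)"
proof -
  have "integral\<^sup>L M f \<le> integral\<^sup>L M (\<lambda>x. \<bar>f x\<bar>)" by (rule integral_mono) (use assms in auto)
  moreover have "- integral\<^sup>L M f \<le> integral\<^sup>L M (\<lambda>x. \<bar>f x\<bar>)"
    unfolding integral_minus[symmetric] by (rule integral_mono) (use assms in auto)
  ultimately show ?thesis by linarith
qed

locale dcore =
  fixes p :: "'s::finite pmf" and D :: "'s \<Rightarrow> mat2" and u v :: "real^2" and a b :: "'s \<Rightarrow> real"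
    and C \<theta> :: real
  assumes SL: "\<forall>j. D j \<in> SL2" and E: "eigd D u v a b" and Cb: "\<And>j. mnorm (D j) \<le> C" and C2: "2 \<le> C"
    and th0: "0 < \<theta>" and th: "\<theta> \<le> (det2 u v)^2"
begin

definition "R = ln C"
definition "K = ln (2 / sqrt \<theta>)"
definition "g j = ln \<bar>a j\<bar>"
definition "mu = measure_pmf.expectation p g"
definition "S n x = (\<Sum>k<n. g (x (int k)))"
definition "F n x = ln (mnorm (iterate D n x)) / real n"

lemma Epr: "norm u = 1" "norm v = 1" "det2 u v \<noteq> 0" "\<And>j. D j *v u = a j *\<^sub>R u" "\<And>j. D j *v v = b j *\<^sub>R v"
  using E by (auto simp: eigd_def)

lemma R_pos: "0 < R" using C2 by (simp add: R_def)

lemma ab1: "\<bar>a j * b j\<bar> = 1"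
proof -
  have "det (D j) = a j * b j" by (rule eig_algebra(1)[OF Epr(4,5,3)])
  moreover have "\<bar>det (D j)\<bar> = 1" using SL by (simp add: SL2_def)
  ultimately show ?thesis by simp
qed

lemma a_le: "\<bar>a j\<bar> \<le> C" using mat_lower[OF Epr(4) Epr(1)] Cb order_trans by blast
lemma b_le: "\<bar>b j\<bar> \<le> C" using mat_lower[OF Epr(5) Epr(2)] Cb order_trans by blast

lemma a_pos: "0 < \<bar>a j\<bar>" using ab1[of j] by auto

lemma g_bound: "\<bar>g j\<bar> \<le> R"
proof -
  have up: "ln \<bar>a j\<bar> \<le> ln C" using a_le a_pos C2 by simp
  have bn: "\<bar>b j\<bar> \<noteq> 0" using ab1[of j] by auto
  have "\<bar>a j\<bar> = 1 / \<bar>b j\<bar>" using ab1[of j] bn by (simp add: eq_divide_eq abs_mult)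
  then have "ln \<bar>a j\<bar> = - ln \<bar>b j\<bar>" using a_pos[of j] by (simp add: ln_div)
  moreover have "ln \<bar>b j\<bar> \<le> ln C" using b_le a_pos ab1[of j] C2 by (subst ln_le_cancel_iff) auto
  ultimately show ?thesis using up by (simp add: g_def R_def)
qed

lemma det_lower: "sqrt \<theta> \<le> \<bar>det2 u v\<bar>"
  using th by (metis real_sqrt_abs real_sqrt_le_mono)

lemma det_upper: "\<bar>det2 u v\<bar> \<le> 1"
  using det2_le_norm[of u v] Epr by simp

lemma K_nonneg: "0 \<le> K"
proof -
  have "sqrt \<theta> \<le> 1" using det_lower det_upper by linarith
  then have s2: "sqrt \<theta> \<le> 2" by linarith
  have s0: "0 < sqrt \<theta>" using th0 by simp
  have "1 \<le> 2 / sqrt \<theta>" using le_divide_eq_1_pos[OF s0] s2 by blast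
  then show ?thesis unfolding K_def by (rule ln_ge_zero)
qed

lemma norm_bounds:
  shows "\<bar>S n x\<bar> \<le> ln (mnorm (iterate D n x))" "ln (mnorm (iterate D n x)) \<le> \<bar>S n x\<bar> + K"
proof -
  define \<alpha> where "\<alpha> = (\<Prod>k<n. a (x (int k)))"
  define \<beta> where "\<beta> = (\<Prod>k<n. b (x (int k)))"
  have eu: "iterate D n x *v u = \<alpha> *\<^sub>R u" unfolding \<alpha>_def by (rule iter_eig) (rule Epr)
  have ev: "iterate D n x *v v = \<beta> *\<^sub>R v" unfolding \<beta>_def by (rule iter_eig) (rule Epr)
  have "\<bar>\<alpha>\<bar> * \<bar>\<beta>\<bar> = (\<Prod>k<n. \<bar>a (x (int k)) * b (x (int k))\<bar>)"
    by (simp add: \<alpha>_def \<beta>_def abs_prod prod.distrib[symmetric] abs_mult)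
  also have "\<dots> = 1" by (simp add: ab1)
  finally have ab: "\<bar>\<alpha>\<bar> * \<bar>\<beta>\<bar> = 1" .
  have lnal: "ln \<bar>\<alpha>\<bar> = S n x"
    unfolding \<alpha>_def S_def g_def abs_prod by (subst ln_prod) (use a_pos in auto)
  have apos: "0 < \<bar>\<alpha>\<bar>" using ab by (cases "\<alpha> = 0") auto
  have al: "\<bar>\<alpha>\<bar> = exp (S n x)" using exp_ln[OF apos] lnal by simp
  then have be: "\<bar>\<beta>\<bar> = exp (- S n x)" using ab by (simp add: exp_minus field_simps)
  have mx: "max \<bar>\<alpha>\<bar> \<bar>\<beta>\<bar> = exp \<bar>S n x\<bar>" unfolding al be by (simp add: max_def abs_if)
  have lo: "max \<bar>\<alpha>\<bar> \<bar>\<beta>\<bar> \<le> mnorm (iterate D n x)"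
    using mat_lower[OF eu Epr(1)] mat_lower[OF ev Epr(2)] by simp
  then show "\<bar>S n x\<bar> \<le> ln (mnorm (iterate D n x))" unfolding mx
    by (metis exp_gt_zero ln_exp ln_le_cancel_iff order_less_le_trans)
  have "mnorm (iterate D n x) \<le> 2 * max \<bar>\<alpha>\<bar> \<bar>\<beta>\<bar> / \<bar>det2 u v\<bar>"
    by (rule mat_upper[OF eu ev Epr(1,2,3)])
  also have "\<dots> \<le> 2 * exp \<bar>S n x\<bar> / sqrt \<theta>"
  proof -
    have sq: "0 < sqrt \<theta>" using th0 by simp
    then have "0 < \<bar>det2 u v\<bar> * sqrt \<theta>" using det_lower by (metis mult_pos_pos order_less_le_trans)
    then show ?thesis unfolding mx using det_lower by (intro divide_left_mono) auto
  qed
  finally have up: "mnorm (iterate D n x) \<le> exp \<bar>S n x\<bar> * (2 / sqrt \<theta>)" by (simp add: mult.commute)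
  have pos: "0 < mnorm (iterate D n x)" using lo mx by (metis exp_gt_zero order_less_le_trans)
  have "ln (mnorm (iterate D n x)) \<le> ln (exp \<bar>S n x\<bar> * (2 / sqrt \<theta>))"
    using up pos by simp
  also have "\<dots> = \<bar>S n x\<bar> + K" by (subst ln_mult) (use th0 in \<open>auto simp: K_def\<close>)
  finally show "ln (mnorm (iterate D n x)) \<le> \<bar>S n x\<bar> + K" .
qed

end

context dcore begin

lemma S_meas: "S n \<in> borel_measurable (bernoulli p)"
  unfolding S_def[abs_def] by (intro borel_measurable_sum bern_meas_g)

lemma F_meas: "F n \<in> borel_measurable (bernoulli p)"
  unfolding F_def[abs_def] by (rule bern_meas_iter[where h="\<lambda>M. ln (mnorm M) / real n"])

lemma S_abs: "\<bar>S n x\<bar> \<le> n * R"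
proof -
  have "\<bar>S n x\<bar> \<le> (\<Sum>k<n. \<bar>g (x (int k))\<bar>)" unfolding S_def by (rule sum_abs)
  also have "\<dots> \<le> (\<Sum>k<n. R)" by (intro sum_mono g_bound)
  finally show ?thesis by simp
qed

lemma F_bounds:
  assumes n: "0 < n"
  shows "\<bar>S n x\<bar> / n \<le> F n x" "F n x \<le> \<bar>S n x\<bar> / n + K / n"
  using norm_bounds[of n x] n by (auto simp: F_def divide_right_mono add_divide_distrib[symmetric])

lemma F_abs:
  assumes n: "0 < n"
  shows "\<bar>F n x\<bar> \<le> R + K"
proof -
  have "\<bar>S n x\<bar> / n \<le> R" using S_abs[of n x] n by (simp add: divide_le_eq mult.commute)
  moreover have "K / n \<le> K" using K_nonneg n by (simp add: divide_le_eq mult_le_cancel_left1)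
  moreover have "0 \<le> \<bar>S n x\<bar> / n" by simp
  ultimately show ?thesis using F_bounds[OF n, of x] by linarith
qed

lemma P: "prob_space (bernoulli p)" by (rule bern_prob)

lemma F_int:
  assumes n: "0 < n"
  shows "integrable (bernoulli p) (F n)"
proof -
  interpret prob_space "bernoulli p" by (rule P)
  show ?thesis by (rule integrable_const_bound[where B="R + K"]) (use F_abs[OF n] F_meas in auto)
qed

lemma S_int: "integrable (bernoulli p) (\<lambda>x. S n x / n - mu)"
proof -
  interpret prob_space "bernoulli p" by (rule P)
  have "\<bar>S n x / n - mu\<bar> \<le> R + \<bar>mu\<bar>" for x
  proof (cases "n = 0")
    case False
    have "\<bar>S n x\<bar> / n \<le> R" using S_abs[of n x] False by (simp add: divide_le_eq mult.commute)
    then have h: "\<bar>S n x / n\<bar> \<le> R" by (simp add: abs_divide)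
    have "-R \<le> S n x / n \<and> S n x / n \<le> R" using abs_le_D1[OF h] abs_le_D2[OF h] by linarith
    then show ?thesis by (simp only: abs_le_iff) (use abs_ge_self[of mu] abs_ge_minus_self[of mu] in linarith)
  qed (simp add: R_pos less_imp_le)
  then show ?thesis by (intro integrable_const_bound[where B="R + \<bar>mu\<bar>"]) (use S_meas in auto)
qed

lemma int_S:
  assumes n: "0 < n"
  shows "integral\<^sup>L (bernoulli p) (\<lambda>x. S n x / n) = mu"
proof -
  interpret prob_space "bernoulli p" by (rule P)
  have gi: "integrable (bernoulli p) (\<lambda>x. g (x (int k)))" for k
    by (rule integrable_const_bound[where B=R]) (use g_bound bern_meas_g in auto)
  have "integral\<^sup>L (bernoulli p) (S n) = (\<Sum>k<n. integral\<^sup>L (bernoulli p) (\<lambda>x. g (x (int k))))"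
    unfolding S_def[abs_def] by (rule Bochner_Integration.integral_sum[where f="\<lambda>k x. g (x (int k))"]) (use gi in auto)
  also have "\<dots> = n * mu" by (simp add: bern_int_g mu_def)
  finally show ?thesis using n by simp
qed

lemma Ln_eq: "Ln p D n = integral\<^sup>L (bernoulli p) (F n)"
  by (simp add: Ln_def F_def[abs_def])

lemma Ln_lower:
  assumes n: "0 < n"
  shows "\<bar>mu\<bar> \<le> Ln p D n"
proof -
  interpret prob_space "bernoulli p" by (rule P)
  have "integrable (bernoulli p) (\<lambda>x. (S n x / n - mu) + mu)"
    by (rule Bochner_Integration.integrable_add[OF S_int]) simp
  then have Si: "integrable (bernoulli p) (\<lambda>x. S n x / n)" by simp
  have "\<bar>mu\<bar> = \<bar>integral\<^sup>L (bernoulli p) (\<lambda>x. S n x / n)\<bar>" using int_S[OF n] by simp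
  also have "\<dots> \<le> integral\<^sup>L (bernoulli p) (\<lambda>x. \<bar>S n x / n\<bar>)" by (rule abs_int_le[OF Si])
  also have "\<dots> \<le> integral\<^sup>L (bernoulli p) (F n)"
    by (rule integral_mono) (use F_int[OF n] integrable_abs[OF Si] F_bounds(1)[OF n] in \<open>auto simp: abs_divide\<close>)
  finally show ?thesis by (simp add: Ln_eq)
qed

lemma tail:
  assumes n: "0 < n" and t: "0 \<le> t"
  shows "measure (bernoulli p) {x\<in>space (bernoulli p). \<bar>S n x / n - mu\<bar> \<ge> t} \<le> 2 * hb R n t"
  unfolding S_def mu_def hb_def by (rule hoeff_bern) (use g_bound R_pos n t in auto)

lemma mu_bound: "\<bar>mu\<bar> \<le> R"
proof -
  interpret prob_space "bernoulli p" by (rule P)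
  have gi: "integrable (bernoulli p) (\<lambda>x. g (x 0))"
    by (rule integrable_const_bound[where B=R]) (use g_bound bern_meas_g in auto)
  have "\<bar>mu\<bar> = \<bar>integral\<^sup>L (bernoulli p) (\<lambda>x. g (x 0))\<bar>" by (simp add: bern_int_g mu_def)
  also have "\<dots> \<le> integral\<^sup>L (bernoulli p) (\<lambda>x. \<bar>g (x 0)\<bar>)" by (rule abs_int_le[OF gi])
  also have "\<dots> \<le> integral\<^sup>L (bernoulli p) (\<lambda>x. R)"
    by (rule integral_mono) (use gi g_bound in auto)
  also have "\<dots> = R" by (simp add: prob_space)
  finally show ?thesis .
qed

lemma E_dev:
  assumes n: "0 < n" and t: "0 \<le> t"
  shows "integral\<^sup>L (bernoulli p) (\<lambda>x. \<bar>S n x / n - mu\<bar>) \<le> eb R n t"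
proof -
  have b: "\<bar>S n x / n - mu\<bar> \<le> 2 * R" for x
  proof -
    have "\<bar>S n x\<bar> / n \<le> R" using S_abs[of n x] n by (simp add: divide_le_eq mult.commute)
    then have h: "\<bar>S n x / n\<bar> \<le> R" by (simp add: abs_divide)
    have "-R \<le> S n x / n \<and> S n x / n \<le> R" using abs_le_D1[OF h] abs_le_D2[OF h] by linarith
    moreover have "\<bar>mu\<bar> \<le> R" by (rule mu_bound)
    ultimately show ?thesis by (simp only: abs_le_iff) linarith
  qed
  have "integral\<^sup>L (bernoulli p) (\<lambda>x. \<bar>S n x / n - mu\<bar>)
      \<le> t + 2 * R * measure (bernoulli p) {x\<in>space (bernoulli p). \<bar>S n x / n - mu\<bar> \<ge> t}"
    by (rule exp_tail_bound[OF P]) (use S_int[of n] b t in auto)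
  also have "\<dots> \<le> t + 2 * R * (2 * hb R n t)"
    using tail[OF n t] R_pos by (intro add_left_mono mult_left_mono) auto
  finally show ?thesis by (simp add: eb_def)
qed

lemma absS: "\<bar>S n x\<bar> / n = \<bar>S n x / n\<bar>" by (simp add: abs_divide)

lemma Ln_upper:
  assumes n: "0 < n" and t: "0 \<le> t"
  shows "Ln p D n \<le> \<bar>mu\<bar> + K / n + eb R n t"
proof -
  interpret prob_space "bernoulli p" by (rule P)
  have "Ln p D n \<le> integral\<^sup>L (bernoulli p) (\<lambda>x. (\<bar>mu\<bar> + K / n) + \<bar>S n x / n - mu\<bar>)"
    unfolding Ln_eq
  proof (rule integral_mono)
    show "integrable (bernoulli p) (F n)" by (rule F_int[OF n])
    show "integrable (bernoulli p) (\<lambda>x. (\<bar>mu\<bar> + K / n) + \<bar>S n x / n - mu\<bar>)"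
      using S_int[of n] by auto
    fix x
    have "\<bar>S n x / n\<bar> \<le> \<bar>mu\<bar> + \<bar>S n x / n - mu\<bar>" by linarith
    then show "F n x \<le> (\<bar>mu\<bar> + K / n) + \<bar>S n x / n - mu\<bar>" using F_bounds(2)[OF n, of x] absS[of n x] by linarith
  qed
  also have "\<dots> = (\<bar>mu\<bar> + K / n) + integral\<^sup>L (bernoulli p) (\<lambda>x. \<bar>S n x / n - mu\<bar>)"
    using S_int[of n] by (subst Bochner_Integration.integral_add) (auto simp: prob_space)
  also have "\<dots> \<le> (\<bar>mu\<bar> + K / n) + eb R n t" using E_dev[OF n t] by simp
  finally show ?thesis by simp
qed

lemma F_dev:
  assumes n: "0 < n" and t: "0 \<le> t"
  shows "\<bar>F n x - Ln p D n\<bar> \<le> \<bar>S n x / n - mu\<bar> + 2 * K / n + eb R n t"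
proof -
  have a: "\<bar>S n x / n\<bar> \<le> F n x" "F n x \<le> \<bar>S n x / n\<bar> + K / n"
    using F_bounds[OF n, of x] by (simp_all add: abs_divide)
  have b: "\<bar>mu\<bar> \<le> Ln p D n" "Ln p D n \<le> \<bar>mu\<bar> + K / n + eb R n t"
    using Ln_lower[OF n] Ln_upper[OF n t] by auto
  have c: "\<bar>\<bar>S n x / n\<bar> - \<bar>mu\<bar>\<bar> \<le> \<bar>S n x / n - mu\<bar>" by (rule abs_triangle_ineq3)
  have e0: "0 \<le> eb R n t" using t R_pos by (simp add: eb_def hb_def)
  have k0: "0 \<le> K / n" using K_nonneg n by simp
  have c1: "\<bar>S n x / n\<bar> - \<bar>mu\<bar> \<le> \<bar>S n x / n - mu\<bar>" using abs_le_D1[OF c] .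
  have c2: "\<bar>mu\<bar> - \<bar>S n x / n\<bar> \<le> \<bar>S n x / n - mu\<bar>" using abs_le_D2[OF c] by simp
  have u1: "F n x - Ln p D n \<le> \<bar>S n x / n - mu\<bar> + 2 * K / n + eb R n t"
    using a(2) b(1) c1 k0 e0 by simp
  have u2: "Ln p D n - F n x \<le> \<bar>S n x / n - mu\<bar> + 2 * K / n + eb R n t"
    using a(1) b(2) c2 k0 e0 by simp
  show ?thesis using u1 u2 by (simp only: abs_le_iff) simp
qed

lemma ldt:
  assumes n: "0 < n" and t: "0 \<le> t" and tau: "t + 2 * K / n + eb R n t \<le> \<tau>"
  shows "measure (bernoulli p) {x\<in>space (bernoulli p). \<bar>F n x - Ln p D n\<bar> > \<tau>} \<le> 2 * hb R n t"
proof -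
  interpret prob_space "bernoulli p" by (rule P)
  have imp: "t \<le> \<bar>S n x / n - mu\<bar>" if "\<tau> < \<bar>F n x - Ln p D n\<bar>" for x
    using F_dev[OF n t, of x] tau that by linarith
  have "{x\<in>space (bernoulli p). \<bar>F n x - Ln p D n\<bar> > \<tau>} \<subseteq> {x\<in>space (bernoulli p). \<bar>S n x / n - mu\<bar> \<ge> t}"
    using imp by auto
  moreover have "{x\<in>space (bernoulli p). \<bar>S n x / n - mu\<bar> \<ge> t} \<in> sets (bernoulli p)"
    using S_meas[of n] by measurable
  ultimately have "measure (bernoulli p) {x\<in>space (bernoulli p). \<bar>F n x - Ln p D n\<bar> > \<tau>}
     \<le> measure (bernoulli p) {x\<in>space (bernoulli p). \<bar>S n x / n - mu\<bar> \<ge> t}"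
    by (intro finite_measure_mono)
  also have "\<dots> \<le> 2 * hb R n t" by (rule tail[OF n t])
  finally show ?thesis .
qed

end

lemma F_gen_bound:
  assumes "\<forall>j. B j \<in> SL2" "\<And>j. mnorm (B j) \<le> C" "0 < n"
  shows "0 \<le> ln (mnorm (iterate B n x)) / n" "ln (mnorm (iterate B n x)) / n \<le> ln C"
proof -
  have g1: "1 \<le> mnorm (iterate B n x)" by (rule iter_ge1[OF assms(1)])
  then show "0 \<le> ln (mnorm (iterate B n x)) / n" by simp
  have "\<bar>det (B undefined)\<bar> = 1" using assms(1) by (simp add: SL2_def)
  then have C1: "1 \<le> C" using mn_ge1[of "B undefined"] assms(2)[of undefined] by linarith
  have "ln (mnorm (iterate B n x)) \<le> ln (C^n)" using g1 iter_bound[of B C n x] assms(2) by simp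
  also have "\<dots> = n * ln C" using C1 by (simp add: ln_realpow)
  finally show "ln (mnorm (iterate B n x)) / n \<le> ln C" using assms(3) by (simp add: divide_le_eq mult.commute)
qed

lemma F_gen_int:
  fixes B :: "'s::finite \<Rightarrow> mat2"
  assumes "\<forall>j. B j \<in> SL2" "\<And>j. mnorm (B j) \<le> C"
  shows "integrable (bernoulli p) (\<lambda>x. ln (mnorm (iterate B n x)) / real n)"
proof (cases "n = 0")
  case True then show ?thesis by simp
next
  case False
  interpret prob_space "bernoulli p" by (rule bern_prob)
  show ?thesis
  proof (rule integrable_const_bound[where B="ln C"])
    show "AE x in bernoulli p. norm (ln (mnorm (iterate B n x)) / real n) \<le> ln C"
    proof (rule AE_I2)
      fix x
      have h: "0 \<le> ln (mnorm (iterate B n x)) / real n" "ln (mnorm (iterate B n x)) / real n \<le> ln C"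
        using F_gen_bound[OF assms, of n x] False by auto
      show "norm (ln (mnorm (iterate B n x)) / real n) \<le> ln C"
        unfolding real_norm_def abs_of_nonneg[OF h(1)] by (rule h(2))
    qed
  qed (rule bern_meas_iter[where h="\<lambda>M. ln (mnorm M) / real n"])
qed

lemma Ln_pert:
  fixes B D :: "'s::finite \<Rightarrow> mat2"
  assumes "\<forall>j. B j \<in> SL2" "\<forall>j. D j \<in> SL2"
    "\<And>j. mnorm (B j) \<le> C" "\<And>j. mnorm (D j) \<le> C" "\<And>j. mnorm (B j - D j) \<le> \<eta>" "1 \<le> C" "0 < n"
  shows "\<bar>Ln p B n - Ln p D n\<bar> \<le> C^n * \<eta>"
proof -
  interpret prob_space "bernoulli p" by (rule bern_prob)
  let ?f = "\<lambda>x. ln (mnorm (iterate B n x)) / real n" and ?h = "\<lambda>x. ln (mnorm (iterate D n x)) / real n"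
  have fi: "integrable (bernoulli p) ?f" by (rule F_gen_int[OF assms(1,3)])
  have hi: "integrable (bernoulli p) ?h" by (rule F_gen_int[OF assms(2,4)])
  have "Ln p B n - Ln p D n = integral\<^sup>L (bernoulli p) (\<lambda>x. ?f x - ?h x)"
    unfolding Ln_def using fi hi by simp
  also have "\<bar>\<dots>\<bar> \<le> integral\<^sup>L (bernoulli p) (\<lambda>x. \<bar>?f x - ?h x\<bar>)" by (rule abs_int_le) (use fi hi in auto)
  also have "\<dots> \<le> integral\<^sup>L (bernoulli p) (\<lambda>x. C^n * \<eta>)"
    by (rule integral_mono) (use fi hi F_pert[OF assms] in auto)
  also have "\<dots> = C^n * \<eta>" by (simp add: prob_space)
  finally show ?thesis .
qed

lemma mult_lip:
  fixes x x' y y' \<eta> c :: real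
  assumes "\<bar>x' - x\<bar> \<le> \<eta>" "\<bar>y' - y\<bar> \<le> \<eta>" "\<bar>x\<bar> \<le> c" "\<bar>y'\<bar> \<le> c + 1"
  shows "\<bar>x' * y' - x * y\<bar> \<le> \<eta> * (2 * c + 1)"
proof -
  have "x' * y' - x * y = (x' - x) * y' + x * (y' - y)" by (simp add: algebra_simps)
  then have "\<bar>x' * y' - x * y\<bar> \<le> \<bar>x' - x\<bar> * \<bar>y'\<bar> + \<bar>x\<bar> * \<bar>y' - y\<bar>"
    by (metis abs_mult abs_triangle_ineq)
  also have "\<dots> \<le> \<eta> * (c + 1) + c * \<eta>"
    using assms by (intro add_mono mult_mono) auto
  finally show ?thesis by (simp add: algebra_simps)
qed

lemma disc_lip:
  fixes M N :: mat2
  assumes d: "\<And>i k. \<bar>M$i$k - N$i$k\<bar> \<le> \<eta>" and c: "\<And>i k. \<bar>N$i$k\<bar> \<le> c" and e: "0 \<le> \<eta>" "\<eta> \<le> 1"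
  shows "\<bar>disc M - disc N\<bar> \<le> \<eta> * (16 * c + 8)"
proof -
  define x where "x = M$1$1 - M$2$2"
  define y where "y = N$1$1 - N$2$2"
  have xy: "\<bar>x - y\<bar> \<le> 2 * \<eta>" using d[of 1 1] d[of 2 2] by (simp add: x_def y_def abs_le_iff; linarith)
  have yb: "\<bar>y\<bar> \<le> 2 * c" using c[of 1 1] c[of 2 2] by (simp add: y_def abs_le_iff; linarith)
  have xb: "\<bar>x\<bar> \<le> 2 * c + 1 + 1" using xy yb e by (simp add: abs_le_iff; linarith)
  have "\<bar>x^2 - y^2\<bar> = \<bar>x - y\<bar> * \<bar>x + y\<bar>" by (simp add: power2_eq_square abs_mult[symmetric] algebra_simps)
  also have "\<dots> \<le> (2 * \<eta>) * (4 * c + 2)"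
    using xy xb yb by (intro mult_mono) (auto simp: abs_le_iff)
  finally have s1: "\<bar>x^2 - y^2\<bar> \<le> \<eta> * (8 * c + 4)" by (simp add: algebra_simps)
  have y21: "\<bar>M$2$1\<bar> \<le> c + 1" using d[of 2 1] c[of 2 1] e by (simp add: abs_le_iff; linarith)
  have s2: "\<bar>M$1$2 * M$2$1 - N$1$2 * N$2$1\<bar> \<le> \<eta> * (2 * c + 1)"
    by (rule mult_lip) (use d c y21 in auto)
  have "disc M - disc N = (x^2 - y^2) + 4 * (M$1$2 * M$2$1 - N$1$2 * N$2$1)"
    by (simp add: disc_def x_def y_def algebra_simps)
  then have "\<bar>disc M - disc N\<bar> \<le> \<bar>x^2 - y^2\<bar> + 4 * \<bar>M$1$2 * M$2$1 - N$1$2 * N$2$1\<bar>"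
    by (metis abs_triangle_ineq abs_mult abs_numeral)
  also have "\<dots> \<le> \<eta> * (8 * c + 4) + 4 * (\<eta> * (2 * c + 1))" using add_mono[OF s1 mult_left_mono[OF s2, of 4]] by simp
  finally show ?thesis by (simp add: algebra_simps)
qed

lemma near_core:
  fixes D A :: "'s::finite \<Rightarrow> mat2" and p :: "'s pmf"
  assumes D: "D \<in> Diag" and Cb: "\<And>j. mnorm (D j) \<le> C" and C2: "2 \<le> C"
    and close: "mnorm (D j0 - A j0) \<le> \<eta>" and e: "0 \<le> \<eta>" "\<eta> \<le> 1"
    and c: "\<And>i k. \<bar>A j0 $ i $ k\<bar> \<le> c" and small: "\<eta> * (16 * c + 8) \<le> \<Delta> / 2"
    and \<Delta>: "0 < \<Delta>" "\<Delta> \<le> disc (A j0)"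
  shows "\<exists>u v a b. dcore D u v a b C (\<Delta> / (16 * C^2))"
proof -
  obtain u v a b where E: "eigd D u v a b" using diag_eigd[OF D] by blast
  have SL: "\<forall>j. D j \<in> SL2" using D by (simp add: Diag_def)
  have Ep: "norm u = 1" "norm v = 1" "det2 u v \<noteq> 0" "D j0 *v u = a j0 *\<^sub>R u" "D j0 *v v = b j0 *\<^sub>R v"
    using E by (auto simp: eigd_def)
  have ent: "\<bar>D j0 $ i $ k - A j0 $ i $ k\<bar> \<le> \<eta>" for i k
    using mn_entry[of "D j0 - A j0" i k] close by simp
  have "\<bar>disc (D j0) - disc (A j0)\<bar> \<le> \<eta> * (16 * c + 8)"
    by (rule disc_lip) (use ent c e in auto)
  then have d1: "\<Delta> / 2 \<le> disc (D j0)" using small \<Delta> by (simp add: abs_le_iff; linarith)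
  have "disc (D j0) = (a j0 - b j0)^2" by (rule eig_algebra(2)[OF Ep(4,5,3)])
  also have "\<dots> \<le> 8 * (mnorm (D j0))^2 * (det2 u v)^2" by (rule angle_bound[OF Ep(4,5,1,2)])
  also have "\<dots> \<le> 8 * C^2 * (det2 u v)^2"
    using Cb[of j0] mn_nonneg[of "D j0"] by (intro mult_right_mono mult_left_mono power_mono) auto
  finally have "\<Delta> / 2 \<le> 8 * C^2 * (det2 u v)^2" using d1 by linarith
  then have th: "\<Delta> / (16 * C^2) \<le> (det2 u v)^2" using C2 by (simp add: field_simps)
  have "dcore D u v a b C (\<Delta> / (16 * C^2))"
    by unfold_locales (use SL E Cb C2 th \<Delta> in auto)
  then show ?thesis by blast
qed

lemma degen:
  fixes A :: "'s::finite \<Rightarrow> mat2" and p :: "'s pmf"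
  assumes A: "A \<in> Diag" and d: "\<forall>j. disc (A j) \<le> 0"
  shows "Lyap p A = 0"
proof -
  obtain u v a b where E: "eigd A u v a b" using diag_eigd[OF A] by blast
  have SL: "\<forall>j. A j \<in> SL2" using A by (simp add: Diag_def)
  have Ep: "norm u = 1" "norm v = 1" "det2 u v \<noteq> 0" "\<And>j. A j *v u = a j *\<^sub>R u" "\<And>j. A j *v v = b j *\<^sub>R v"
    using E by (auto simp: eigd_def)
  have ab: "b j = a j" for j
  proof -
    have "(a j - b j)^2 = disc (A j)" by (rule eig_algebra(2)[OF Ep(4,5,3), symmetric])
    then have "(a j - b j)^2 \<le> 0" using d by simp
    then show ?thesis by simp
  qed
  have a1: "\<bar>a j\<bar> = 1" for j
  proof -
    have "det (A j) = a j * b j" by (rule eig_algebra(1)[OF Ep(4,5,3)])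
    moreover have "\<bar>det (A j)\<bar> = 1" using SL by (simp add: SL2_def)
    ultimately have "\<bar>a j\<bar> * \<bar>a j\<bar> = 1" by (simp add: ab abs_mult)
    then show ?thesis by (metis abs_ge_zero mult_cancel_right1 mult_le_cancel_right1 order_antisym_conv zero_less_one_class.zero_le_one abs_mult_self_eq le_cases less_eq_real_def)
  qed
  have m1: "mnorm (iterate A n x) = 1" for n x
  proof (rule antisym)
    define \<alpha> where "\<alpha> = (\<Prod>k<n. a (x (int k)))"
    have al: "\<bar>\<alpha>\<bar> = 1" by (simp add: \<alpha>_def abs_prod a1)
    have eu: "iterate A n x *v u = \<alpha> *\<^sub>R u" unfolding \<alpha>_def by (rule iter_eig) (rule Ep)
    have ev: "iterate A n x *v v = \<alpha> *\<^sub>R v" unfolding \<alpha>_def by (rule iter_eig) (simp add: Ep(5) ab)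
    show "mnorm (iterate A n x) \<le> 1"
    proof (rule mn_le)
      fix w
      define s where "s = det2 w v / det2 u v"
      define t where "t = det2 u w / det2 u v"
      have w: "w = s *\<^sub>R u + t *\<^sub>R v" unfolding s_def t_def by (rule decomp[OF Ep(3)])
      have "iterate A n x *v w = \<alpha> *\<^sub>R w"
        by (subst (1 2) w) (simp add: matrix_vector_right_distrib matrix_vector_mult_scaleR eu ev algebra_simps)
      then show "norm (iterate A n x *v w) \<le> 1 * norm w" using al by simp
    qed
    show "1 \<le> mnorm (iterate A n x)" by (rule iter_ge1[OF SL])
  qed
  have "Ln p A n = 0" for n by (simp add: Ln_def m1)
  then have "(\<lambda>n. Ln p A n) = (\<lambda>n. 0)" by auto
  then show ?thesis unfolding Lyap_def by (simp add: limI)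
qed

definition tt :: "nat \<Rightarrow> real" where "tt n = real n powr (-1/5) / 8"

lemma asym_A:
  fixes R K :: real assumes "0 < R" "0 < K"
  shows "(\<lambda>n. K / real n + eb R n (tt n)) \<longlonglongrightarrow> 0"
proof -
  have "(\<lambda>n::nat. K / real n + (real n powr (-1/5) / 8 + 4 * R * exp (- (real n * (real n powr (-1/5) / 8)^2 / (2 * R^2))))) \<longlonglongrightarrow> 0"
    using assms by real_asymp
  then show ?thesis by (simp add: eb_def hb_def tt_def)
qed

lemma asym_2:
  fixes R K :: real assumes "0 < R" "0 < K"
  shows "eventually (\<lambda>n. 2 * K / real n + 4 * R * hb R n (tt n) \<le> real n powr (-1/5) / 2) sequentially"
proof -
  have "eventually (\<lambda>n::nat. 2 * K / real n + 4 * R * exp (- (real n * (real n powr (-1/5) / 8)^2 / (2 * R^2))) \<le> real n powr (-1/5) / 2) sequentially"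
    using assms by real_asymp
  then show ?thesis by (simp add: hb_def tt_def)
qed

lemma asym_3:
  fixes R :: real assumes "0 < R"
  shows "eventually (\<lambda>n. 2 * hb R n (tt n) \<le> exp (- (real n powr (1/3)))) sequentially"
proof -
  have "eventually (\<lambda>n::nat. 2 * exp (- (real n * (real n powr (-1/5) / 8)^2 / (2 * R^2))) \<le> exp (- (real n powr (1/3)))) sequentially"
    using assms by real_asymp
  then show ?thesis by (simp add: hb_def tt_def)
qed

lemma asym_4:
  fixes R K :: real assumes R: "0 < R" and K: "0 < K"
  shows "eventually (\<lambda>n. K / real n + eb R n (tt n) + eb R (2 * n) (tt (2 * n)) \<le> 7 / 4 * real n powr (-1/5)) sequentially"
proof -
  have "eventually (\<lambda>m::nat. 4 * R * exp (- (real m * (real m powr (-1/5) / 8)^2 / (2 * R^2))) \<le> real m powr (-1/5) / 4) sequentially"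
    using R by real_asymp
  then obtain N1 where N1: "\<And>m. m \<ge> N1 \<Longrightarrow> 4 * R * hb R m (tt m) \<le> real m powr (-1/5) / 4"
    unfolding eventually_sequentially hb_def tt_def by blast
  have "eventually (\<lambda>n::nat. K / real n + 4 * R * exp (- (real n * (real n powr (-1/5) / 8)^2 / (2 * R^2))) \<le> real n powr (-1/5)) sequentially"
    using R K by real_asymp
  then obtain N2 where N2: "\<And>n. n \<ge> N2 \<Longrightarrow> K / real n + 4 * R * hb R n (tt n) \<le> real n powr (-1/5)"
    unfolding eventually_sequentially hb_def tt_def by blast
  show ?thesis unfolding eventually_sequentially
  proof (intro exI allI impI)
    fix n assume n: "max 1 (max N1 N2) \<le> n"
    have n1: "1 \<le> n" using n by simp
    have a: "4 * R * hb R (2 * n) (tt (2 * n)) \<le> real (2 * n) powr (-1/5) / 4" using N1[of "2 * n"] n by simp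
    have mono: "real (2 * n) powr (-1/5) \<le> real n powr (-1/5)"
      by (rule powr_mono2') (use n1 in auto)
    have b: "K / real n + 4 * R * hb R n (tt n) \<le> real n powr (-1/5)" using N2[of n] n by simp
    have t2: "tt (2 * n) \<le> tt n" using mono by (simp add: tt_def)
    show "K / real n + eb R n (tt n) + eb R (2 * n) (tt (2 * n)) \<le> 7 / 4 * real n powr (-1/5)"
    proof -
      have "0 \<le> real n powr (-1/5)" by simp
      then show ?thesis using a b t2 mono unfolding eb_def tt_def by linarith
    qed
  qed
qed

lemma asym_L:
  fixes R \<Lambda> :: real assumes "0 < R" "0 < \<Lambda>"
  shows "eventually (\<lambda>L. 2 * exp (2 * R * L powr (3/4) - L) \<le> \<Lambda> / 6 \<and>
                         2 * exp (2 * R * L powr (3/4) - L) \<le> L powr (-3/20) / 8) at_top"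
proof (rule eventually_conj)
  show "eventually (\<lambda>L. 2 * exp (2 * R * L powr (3/4) - L) \<le> \<Lambda> / 6) at_top"
    using assms by real_asymp
  show "eventually (\<lambda>L. 2 * exp (2 * R * L powr (3/4) - L) \<le> L powr (-3/20) / 8) at_top"
    using assms by real_asymp
qed

lemma mn_zero: "mnorm (0::mat2) = 0"
proof -
  have "mnorm (0::mat2) \<le> 0" by (rule mn_le) simp
  then show ?thesis using mn_nonneg[of 0] by simp
qed

lemma cd_le: "cocycle_dist (B::'s::finite \<Rightarrow> mat2) D \<le> r \<Longrightarrow> mnorm (B j - D j) \<le> r"
  by (simp add: cocycle_dist_def)

lemma cd_nonneg: "0 \<le> cocycle_dist (B::'s::finite \<Rightarrow> mat2) D"
  using cd_le[of B D "cocycle_dist B D" undefined] mn_nonneg[of "B undefined - D undefined"] by simp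

theorem proposition6p1:
  fixes p :: "'s::finite pmf" and A :: "'s \<Rightarrow> mat2"
  assumes p_pos: "set_pmf p = UNIV"
    and A_diag: "A \<in> Diag"
    and L_pos: "Lyap p A > 0"
  shows "\<exists>\<delta>>0. \<exists>nbar::nat. \<forall>B :: 's \<Rightarrow> mat2.
           (\<forall>j. B j \<in> SL2) \<and> cocycle_dist B A \<le> \<delta> \<longrightarrow>
           (\<forall>n::nat. nbar \<le> n \<and>
                (dist_Diag B = 0 \<or> real n \<le> (ln (1 / dist_Diag B)) powr (3/4)) \<longrightarrow>
              Ln p B n \<ge> Lyap p A / 3 \<and>
              \<bar>Ln p B (2*n) - Ln p B n\<bar> \<le> 2 * real n powr (-1/5) \<and>
              measure (bernoulli p)
                {x \<in> space (bernoulli p).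
                   \<bar>ln (mnorm (iterate B n x)) / real n - Ln p B n\<bar> > real n powr (-1/5)}
                \<le> exp (- (real n powr (1/3))))"
proof -
  have SLA: "\<forall>j. A j \<in> SL2" using A_diag by (simp add: Diag_def)
  define C0 where "C0 = Max (range (\<lambda>j. mnorm (A j)))"
  have C0: "mnorm (A j) \<le> C0" for j unfolding C0_def by (simp add: Max_ge_iff)
  have C0n: "0 \<le> C0" using C0[of undefined] mn_nonneg[of "A undefined"] by linarith
  define C where "C = C0 + 2"
  have C2: "2 \<le> C" using C0n by (simp add: C_def)
  have C1: "1 \<le> C" using C2 by simp
  have "\<exists>j0. 0 < disc (A j0)"
  proof (rule ccontr)
    assume "\<not> (\<exists>j0. 0 < disc (A j0))"
    then have "\<forall>j. disc (A j) \<le> 0" by (simp add: not_less)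
    then have "Lyap p A = 0" by (rule degen[OF A_diag])
    with L_pos show False by simp
  qed
  then obtain j0 where Dpos: "0 < disc (A j0)" by blast
  define \<Delta> where "\<Delta> = disc (A j0)"
  define \<theta> where "\<theta> = \<Delta> / (16 * C^2)"
  define \<eta>d where "\<eta>d = min 1 (\<Delta> / (2 * (16 * C0 + 8)))"
  have \<Delta>0: "0 < \<Delta>" using Dpos by (simp add: \<Delta>_def)
  have \<eta>d: "0 < \<eta>d" "\<eta>d \<le> 1" "\<eta>d * (16 * C0 + 8) \<le> \<Delta> / 2"
  proof -
    show "0 < \<eta>d" using \<Delta>0 C0n by (simp add: \<eta>d_def)
    show "\<eta>d \<le> 1" by (simp add: \<eta>d_def)
    have "\<eta>d \<le> \<Delta> / (2 * (16 * C0 + 8))" by (simp add: \<eta>d_def)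
    then have "\<eta>d * (16 * C0 + 8) \<le> \<Delta> / (2 * (16 * C0 + 8)) * (16 * C0 + 8)"
      using C0n by (intro mult_right_mono) auto
    also have "\<dots> = \<Delta> / 2" using C0n by (simp add: field_simps)
    finally show "\<eta>d * (16 * C0 + 8) \<le> \<Delta> / 2" .
  qed
  have entA: "\<bar>A j0 $ i $ k\<bar> \<le> C0" for i k using mn_entry[of "A j0" i k] C0[of j0] by linarith
  have core: "\<exists>u v a b. dcore D u v a b C \<theta>" if D: "D \<in> Diag" and DA: "\<And>j. mnorm (D j - A j) \<le> \<eta>d" for D
  proof -
    have Cb: "mnorm (D j) \<le> C" for j
      using mn_diff[of "D j" "A j"] C0[of j] DA[of j] \<eta>d(2) by (simp add: C_def)
    have e0: "0 \<le> \<eta>d" using \<eta>d(1) by simp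
    show ?thesis unfolding \<theta>_def
      by (rule near_core[where D=D and A=A and ?j0.0=j0 and C=C and \<eta>=\<eta>d and c=C0 and \<Delta>=\<Delta>, OF D Cb C2 DA[of j0] e0 \<eta>d(2) entA \<eta>d(3) \<Delta>0]) (simp add: \<Delta>_def)
  qed
  obtain uA vA aA bA where cA: "dcore A uA vA aA bA C \<theta>"
    using core[OF A_diag] \<eta>d(1) by (auto simp: mn_zero)
  interpret cA: dcore p A uA vA aA bA C \<theta> by (rule cA)
  define R where "R = cA.R"
  define K where "K = cA.K"
  define Kp where "Kp = K + 1"
  have R: "0 < R" using cA.R_pos by (simp add: R_def)
  have RC: "R = ln C" by (simp add: R_def cA.R_def)
  have K: "0 \<le> K" using cA.K_nonneg by (simp add: K_def)
  have Kp: "0 < Kp" using K by (simp add: Kp_def)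
  have tt0: "0 \<le> tt n" for n by (simp add: tt_def)
  have eb0: "0 \<le> eb R n t" if "0 \<le> t" for n t using that R by (simp add: eb_def hb_def)
  have lim: "(\<lambda>n. Ln p A n) \<longlonglongrightarrow> \<bar>cA.mu\<bar>"
  proof (rule tendsto_sandwich[where f="\<lambda>n. \<bar>cA.mu\<bar>" and h="\<lambda>n. \<bar>cA.mu\<bar> + (Kp / real n + eb R n (tt n))"])
    show "eventually (\<lambda>n. \<bar>cA.mu\<bar> \<le> Ln p A n) sequentially"
      unfolding eventually_sequentially by (rule exI[of _ 1]) (auto intro: cA.Ln_lower)
    show "eventually (\<lambda>n. Ln p A n \<le> \<bar>cA.mu\<bar> + (Kp / real n + eb R n (tt n))) sequentially"
      unfolding eventually_sequentially
    proof (rule exI[of _ 1], intro allI impI)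
      fix n :: nat assume "1 \<le> n"
      then have n: "0 < n" by simp
      have "K / real n \<le> Kp / real n" by (simp add: Kp_def divide_right_mono)
      then show "Ln p A n \<le> \<bar>cA.mu\<bar> + (Kp / real n + eb R n (tt n))"
        using cA.Ln_upper[OF n tt0[of n]] by (simp add: R_def K_def)
    qed
    show "(\<lambda>n. \<bar>cA.mu\<bar>) \<longlonglongrightarrow> \<bar>cA.mu\<bar>" by simp
    show "(\<lambda>n. \<bar>cA.mu\<bar> + (Kp / real n + eb R n (tt n))) \<longlonglongrightarrow> \<bar>cA.mu\<bar>"
      using tendsto_add[OF tendsto_const asym_A[OF R Kp]] by simp
  qed
  define \<Lambda> where "\<Lambda> = \<bar>cA.mu\<bar>"
  have LA: "Lyap p A = \<Lambda>" unfolding Lyap_def \<Lambda>_def using lim by (rule limI)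
  have \<Lambda>: "0 < \<Lambda>" using L_pos LA by simp
  have "eventually (\<lambda>n. Kp / real n + eb R n (tt n) < \<Lambda> / 4) sequentially"
    using order_tendstoD(2)[OF asym_A[OF R Kp], of "\<Lambda> / 4"] \<Lambda> by simp
  then obtain N0 where N0: "\<And>n. n \<ge> N0 \<Longrightarrow> Kp / real n + eb R n (tt n) < \<Lambda> / 4"
    unfolding eventually_sequentially by blast
  define n0 where "n0 = max 1 N0"
  have n0: "0 < n0" "Kp / real n0 + eb R n0 (tt n0) < \<Lambda> / 4" using N0[of n0] by (auto simp: n0_def)
  define \<delta> where "\<delta> = min (\<eta>d / 3) (\<Lambda> / (12 * C^n0))"
  have Cn0: "0 < C^n0" using C1 by simp
  have \<delta>: "0 < \<delta>" "3 * \<delta> \<le> \<eta>d" "3 * \<delta> \<le> 1" "C^n0 * (3 * \<delta>) \<le> \<Lambda> / 4" "\<delta> < 1"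
  proof -
    show "0 < \<delta>" using \<eta>d(1) \<Lambda> Cn0 by (simp add: \<delta>_def)
    show d3: "3 * \<delta> \<le> \<eta>d" by (simp add: \<delta>_def)
    then show "3 * \<delta> \<le> 1" using \<eta>d(2) by simp
    then show "\<delta> < 1" by simp
    have "\<delta> \<le> \<Lambda> / (12 * C^n0)" by (simp add: \<delta>_def)
    then have "C^n0 * (3 * \<delta>) \<le> C^n0 * (3 * (\<Lambda> / (12 * C^n0)))" using Cn0 by (intro mult_left_mono) auto
    also have "\<dots> = \<Lambda> / 4" using Cn0 by (simp add: field_simps del: power_eq_0_iff)
    finally show "C^n0 * (3 * \<delta>) \<le> \<Lambda> / 4" .
  qed
  have "eventually (\<lambda>n. (2 * Kp / real n + 4 * R * hb R n (tt n) \<le> real n powr (-1/5) / 2 \<and>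
      2 * hb R n (tt n) \<le> exp (- (real n powr (1/3)))) \<and>
      Kp / real n + eb R n (tt n) + eb R (2 * n) (tt (2 * n)) \<le> 7 / 4 * real n powr (-1/5)) sequentially"
    by (intro eventually_conj asym_2 asym_3 asym_4 R Kp)
  then obtain N where N: "\<And>n. n \<ge> N \<Longrightarrow> (2 * Kp / real n + 4 * R * hb R n (tt n) \<le> real n powr (-1/5) / 2 \<and>
      2 * hb R n (tt n) \<le> exp (- (real n powr (1/3)))) \<and>
      Kp / real n + eb R n (tt n) + eb R (2 * n) (tt (2 * n)) \<le> 7 / 4 * real n powr (-1/5)"
    unfolding eventually_sequentially by blast
  obtain L0 where L0: "\<And>L. L \<ge> L0 \<Longrightarrow> 2 * exp (2 * R * L powr (3/4) - L) \<le> \<Lambda> / 6 \<and>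
                         2 * exp (2 * R * L powr (3/4) - L) \<le> L powr (-3/20) / 8"
    using asym_L[OF R \<Lambda>] unfolding eventually_at_top_linorder by blast
  define nbar where "nbar = max 1 (max N (nat \<lceil>L0\<rceil>))"
  show ?thesis
  proof (rule exI[of _ \<delta>], intro conjI \<delta>(1) exI[of _ nbar] allI impI)
    fix B :: "'s \<Rightarrow> mat2" and n :: nat
    assume hB: "(\<forall>j. B j \<in> SL2) \<and> cocycle_dist B A \<le> \<delta>"
      and hn: "nbar \<le> n \<and> (dist_Diag B = 0 \<or> real n \<le> ln (1 / dist_Diag B) powr (3 / 4))"
    have SLB: "\<forall>j. B j \<in> SL2" using hB by simp
    have BA: "mnorm (B j - A j) \<le> \<delta>" for j using hB cd_le by blast
    have CB: "mnorm (B j) \<le> C" for j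
      using mn_diff[of "B j" "A j"] C0[of j] BA[of j] \<delta>(3) by (simp add: C_def)
    have n1: "1 \<le> n" and nN: "N \<le> n" and nL: "L0 \<le> real n"
    proof -
      show "1 \<le> n" "N \<le> n" using hn by (auto simp: nbar_def)
      have "nat \<lceil>L0\<rceil> \<le> n" using hn by (auto simp: nbar_def)
      then show "L0 \<le> real n" by linarith
    qed
    have npos: "0 < n" using n1 by simp
    define X where "X = real n powr (-1/5)"
    have X0: "0 < X" using npos by (simp add: X_def)
    define d where "d = dist_Diag B"
    define Sd where "Sd = (\<lambda>D. cocycle_dist B D) ` (Diag :: ('s \<Rightarrow> mat2) set)"
    have Sd_ne: "Sd \<noteq> {}" using A_diag by (auto simp: Sd_def)
    have Sd_bdd: "bdd_below Sd" unfolding Sd_def by (rule bdd_belowI[of _ 0]) (auto simp: cd_nonneg)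
    have d_def': "d = Inf Sd" by (simp add: d_def Sd_def dist_Diag_def)
    have d0: "0 \<le> d" unfolding d_def' by (rule cInf_greatest[OF Sd_ne]) (auto simp: Sd_def cd_nonneg)
    have d\<delta>: "d \<le> \<delta>"
    proof -
      have "d \<le> cocycle_dist B A" unfolding d_def' by (rule cInf_lower[OF _ Sd_bdd]) (use A_diag in \<open>auto simp: Sd_def\<close>)
      then show ?thesis using hB by simp
    qed
    define \<epsilon> where "\<epsilon> = min (\<Lambda> / 6) (X / 8)"
    have \<epsilon>0: "0 < \<epsilon>" using \<Lambda> X0 by (simp add: \<epsilon>_def)
    have C2n: "0 < C^(2*n)" using C1 by simp
    obtain D \<eta> where D: "D \<in> Diag" and BD: "\<And>j. mnorm (B j - D j) \<le> \<eta>" and \<eta>0: "0 \<le> \<eta>"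
      and \<eta>\<delta>: "\<eta> \<le> 2 * \<delta>" and \<eta>\<epsilon>: "C^(2*n) * \<eta> \<le> \<epsilon>"
    proof (cases "d = 0")
      case True
      define \<eta> where "\<eta> = min \<delta> (\<epsilon> / C^(2*n))"
      have \<eta>p: "0 < \<eta>" using \<delta>(1) \<epsilon>0 C2n by (simp add: \<eta>_def)
      have "Inf Sd < \<eta>" using True \<eta>p by (simp add: d_def')
      then obtain s where "s \<in> Sd" "s < \<eta>" using cInf_lessD[OF Sd_ne] by blast
      then obtain D where D: "D \<in> Diag" and cd: "cocycle_dist B D < \<eta>" by (auto simp: Sd_def)
      have "C^(2*n) * \<eta> \<le> C^(2*n) * (\<epsilon> / C^(2*n))" using C2n by (intro mult_left_mono) (auto simp: \<eta>_def)
      also have "\<dots> = \<epsilon>"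
      proof -
        have "\<And>c::real. 0 < c \<Longrightarrow> c * (\<epsilon> / c) = \<epsilon>" by simp
        then show ?thesis using C2n by blast
      qed
      finally have "C^(2*n) * \<eta> \<le> \<epsilon>" .
      moreover have "\<eta> \<le> 2 * \<delta>" using \<delta>(1) by (simp add: \<eta>_def)
      ultimately show ?thesis using that[OF D, of \<eta>] cd cd_le[of B D] \<eta>p by fastforce
    next
      case False
      then have dp: "0 < d" using d0 by simp
      have "Inf Sd < 2 * d" using dp by (simp add: d_def')
      then obtain s where "s \<in> Sd" "s < 2 * d" using cInf_lessD[OF Sd_ne] by blast
      then obtain D where D: "D \<in> Diag" and cd: "cocycle_dist B D < 2 * d" by (auto simp: Sd_def)
      define L where "L = ln (1 / d)"
      have nLp: "real n \<le> L powr (3/4)" using hn False by (simp add: L_def d_def)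
      have d1: "d < 1" using d\<delta> \<delta>(5) by simp
      have Lpos: "0 < L" using dp d1 by (simp add: L_def)
      have L1: "1 \<le> L"
      proof (rule ccontr)
        assume "\<not> 1 \<le> L"
        then have "L < 1" by simp
        then have "L powr (3/4) < 1" using Lpos powr_less_mono2[of "3/4" L 1] by simp
        then show False using nLp n1 by simp
      qed
      have "L powr (3/4) \<le> L powr 1" using L1 by (intro powr_mono) auto
      then have nLL: "real n \<le> L" using nLp L1 by simp
      have dL: "d = exp (- L)" using dp by (simp add: L_def exp_minus ln_div)
      have CL: "C^(2*n) \<le> exp (2 * R * L powr (3/4))"
      proof -
        have "C^(2*n) = (exp (ln C))^(2*n)" using C1 by simp
        also have "\<dots> = exp (real (2*n) * ln C)" by (simp only: exp_of_nat_mult)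
        also have "\<dots> = exp (2 * R * real n)" by (simp add: RC)
        also have "\<dots> \<le> exp (2 * R * L powr (3/4))" using R nLp by simp
        finally show ?thesis .
      qed
      have Lb: "2 * exp (2 * R * L powr (3/4) - L) \<le> \<Lambda> / 6 \<and> 2 * exp (2 * R * L powr (3/4) - L) \<le> L powr (-3/20) / 8"
        using L0[of L] nL nLL by simp
      have LX: "L powr (-3/20) \<le> X"
      proof -
        have "(L powr (3/4)) powr (-1/5) \<le> real n powr (-1/5)"
          by (rule powr_mono2') (use nLp npos in auto)
        then show ?thesis by (simp add: X_def powr_powr)
      qed
      have "C^(2*n) * (2 * d) \<le> exp (2 * R * L powr (3/4)) * (2 * d)"
        using CL dp by (intro mult_right_mono) auto
      also have "\<dots> = 2 * exp (2 * R * L powr (3/4) - L)" unfolding dL by (simp add: exp_diff exp_minus field_simps)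
      finally have c2: "C^(2*n) * (2 * d) \<le> 2 * exp (2 * R * L powr (3/4) - L)" .
      have "C^(2*n) * (2 * d) \<le> \<epsilon>" using c2 Lb LX by (simp add: \<epsilon>_def)
      moreover have "2 * d \<le> 2 * \<delta>" using d\<delta> by simp
      ultimately show ?thesis using that[OF D, of "2 * d"] cd cd_le[of B D] dp by fastforce
    qed
    have DA: "mnorm (D j - A j) \<le> 3 * \<delta>" for j
    proof -
      have "mnorm (D j - A j) \<le> mnorm (D j - B j) + mnorm (B j - A j)" by (rule mn_tri)
      also have "\<dots> \<le> \<eta> + \<delta>" using BD[of j] BA[of j] mn_sym[of "D j" "B j"] by simp
      finally show ?thesis using \<eta>\<delta> by simp
    qed
    obtain u v a b where cD: "dcore D u v a b C \<theta>"
      using core[OF D] DA \<delta>(2) order_trans by blast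
    interpret cD: dcore p D u v a b C \<theta> by (rule cD)
    have RD: "cD.R = R" by (simp add: R_def cD.R_def cA.R_def)
    have KD: "cD.K = K" by (simp add: K_def cD.K_def cA.K_def)
    have SLD: "\<forall>j. D j \<in> SL2" by (rule cD.SL)
    have CD: "mnorm (D j) \<le> C" for j by (rule cD.Cb)
    have muD: "\<Lambda> / 2 \<le> \<bar>cD.mu\<bar>"
    proof -
      have u: "Ln p D n0 \<le> \<bar>cD.mu\<bar> + K / real n0 + eb R n0 (tt n0)"
        using cD.Ln_upper[OF n0(1) tt0[of n0]] by (simp add: RD KD)
      have pt: "\<bar>Ln p D n0 - Ln p A n0\<bar> \<le> C^n0 * (3 * \<delta>)"
        by (rule Ln_pert[OF SLD SLA CD C0[THEN order_trans] DA C1 n0(1)]) (simp add: C_def)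
      have l: "\<Lambda> \<le> Ln p A n0" using cA.Ln_lower[OF n0(1)] by (simp add: \<Lambda>_def)
      have "K / real n0 \<le> Kp / real n0" by (simp add: Kp_def divide_right_mono)
      then show ?thesis using u pt l n0(2) \<delta>(4) by (simp add: abs_le_iff; linarith)
    qed
    have Cnn: "C^n \<le> C^(2*n)" using C1 by (intro power_increasing) auto
    have e1: "C^n * \<eta> \<le> \<epsilon>" using mult_right_mono[OF Cnn \<eta>0] \<eta>\<epsilon> by linarith
    have pB1: "\<bar>Ln p B n - Ln p D n\<bar> \<le> C^n * \<eta>"
      by (rule Ln_pert[OF SLB SLD CB CD BD C1 npos])
    have pB2: "\<bar>Ln p B (2*n) - Ln p D (2*n)\<bar> \<le> C^(2*n) * \<eta>"
      by (rule Ln_pert[OF SLB SLD CB CD BD C1]) (use npos in simp)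
    have \<epsilon>1: "\<epsilon> \<le> \<Lambda> / 6" "\<epsilon> \<le> X / 8" by (auto simp: \<epsilon>_def)
    have En: "(2 * Kp / real n + 4 * R * hb R n (tt n) \<le> X / 2 \<and>
      2 * hb R n (tt n) \<le> exp (- (real n powr (1/3)))) \<and>
      Kp / real n + eb R n (tt n) + eb R (2 * n) (tt (2 * n)) \<le> 7 / 4 * X"
      using N[OF nN] by (simp add: X_def)
    have KKp: "K / real n \<le> Kp / real n" by (simp add: Kp_def divide_right_mono)
    have c1: "Lyap p A / 3 \<le> Ln p B n"
    proof -
      have "\<bar>cD.mu\<bar> \<le> Ln p D n" by (rule cD.Ln_lower[OF npos])
      then show ?thesis using LA muD pB1 e1 \<epsilon>1(1) by (simp add: abs_le_iff; linarith)
    qed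
    have c2: "\<bar>Ln p B (2*n) - Ln p B n\<bar> \<le> 2 * real n powr (-1/5)"
    proof -
      have n2: "0 < 2 * n" using npos by simp
      have a1: "\<bar>cD.mu\<bar> \<le> Ln p D n" "Ln p D n \<le> \<bar>cD.mu\<bar> + K / real n + eb R n (tt n)"
        using cD.Ln_lower[OF npos] cD.Ln_upper[OF npos tt0[of n]] by (simp_all add: RD KD)
      have a2: "\<bar>cD.mu\<bar> \<le> Ln p D (2*n)" "Ln p D (2*n) \<le> \<bar>cD.mu\<bar> + K / real (2*n) + eb R (2*n) (tt (2*n))"
        using cD.Ln_lower[OF n2] cD.Ln_upper[OF n2 tt0[of "2*n"]] by (simp_all add: RD KD)
      have k2: "K / real (2*n) \<le> K / real n" using K npos by (simp add: divide_left_mono)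
      have eb1: "0 \<le> eb R n (tt n)" "0 \<le> eb R (2*n) (tt (2*n))" using eb0 tt0 by auto
      have E4: "Kp / real n + eb R n (tt n) + eb R (2 * n) (tt (2 * n)) \<le> 7 / 4 * X" using En by blast
      have dd: "\<bar>Ln p D (2*n) - Ln p D n\<bar> \<le> 7 / 4 * X"
        unfolding abs_le_iff by (intro conjI) (use a1 a2 k2 KKp E4 eb1 in linarith)+
      have "\<bar>Ln p B (2*n) - Ln p B n\<bar> \<le> 2 * X"
        unfolding abs_le_iff using dd pB1 pB2 e1 \<eta>\<epsilon> \<epsilon>1(2) unfolding abs_le_iff by (intro conjI; linarith)
      then show ?thesis by (simp add: X_def)
    qed
    have c3: "measure (bernoulli p) {x \<in> space (bernoulli p).
                   \<bar>ln (mnorm (iterate B n x)) / real n - Ln p B n\<bar> > real n powr (-1/5)}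
                \<le> exp (- (real n powr (1/3)))"
    proof -
      interpret P: prob_space "bernoulli p" by (rule bern_prob)
      let ?SB = "{x \<in> space (bernoulli p). \<bar>ln (mnorm (iterate B n x)) / real n - Ln p B n\<bar> > real n powr (-1/5)}"
      let ?SD = "{x \<in> space (bernoulli p). \<bar>cD.F n x - Ln p D n\<bar> > 3 / 4 * X}"
      have sub: "?SB \<subseteq> ?SD"
      proof (intro subsetI)
        fix x assume x: "x \<in> ?SB"
        have fp: "\<bar>ln (mnorm (iterate B n x)) / n - ln (mnorm (iterate D n x)) / n\<bar> \<le> C^n * \<eta>"
          by (rule F_pert[OF SLB SLD CB CD BD C1 npos])
        have "3 / 4 * X < \<bar>cD.F n x - Ln p D n\<bar>"
        proof -
          have xs: "X < \<bar>ln (mnorm (iterate B n x)) / real n - Ln p B n\<bar>" using x by (simp add: X_def)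
          show ?thesis using xs fp pB1 e1 \<epsilon>1(2) unfolding cD.F_def by linarith
        qed
        then show "x \<in> ?SD" using x by simp
      qed
      have SDm: "?SD \<in> sets (bernoulli p)" using cD.F_meas[of n] by measurable
      have "measure (bernoulli p) ?SB \<le> measure (bernoulli p) ?SD"
        by (rule P.finite_measure_mono[OF sub SDm])
      also have "\<dots> \<le> 2 * hb cD.R n (tt n)"
      proof (rule cD.ldt[OF npos tt0])
        show "tt n + 2 * cD.K / real n + eb cD.R n (tt n) \<le> 3 / 4 * X"
        proof -
          have E2: "2 * Kp / real n + 4 * R * hb R n (tt n) \<le> X / 2" using En by blast
          have t8: "tt n = X / 8" by (simp add: tt_def X_def)
          have "2 * K / real n \<le> 2 * Kp / real n" by (simp add: Kp_def divide_right_mono)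
          then show ?thesis unfolding RD KD eb_def using E2 t8 by linarith
        qed
      qed
      also have "\<dots> \<le> exp (- (real n powr (1/3)))" using En by (simp add: RD)
      finally show ?thesis .
    qed
    show "Lyap p A / 3 \<le> Ln p B n" by (rule c1)
    show "\<bar>Ln p B (2*n) - Ln p B n\<bar> \<le> 2 * real n powr (-1/5)" by (rule c2)
    show "measure (bernoulli p) {x \<in> space (bernoulli p).
                   \<bar>ln (mnorm (iterate B n x)) / real n - Ln p B n\<bar> > real n powr (-1/5)}
                \<le> exp (- (real n powr (1/3)))" by (rule c3)
  qed
qed

end
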